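(* Let $v,w:\mathbb{C}\rightarrow\mathbb{R}$ be two solutions of the sinh-Gordon equation, $v_{z\bar z}+\frac12\sinh(2v)=0$ and $w_{z\bar z}+\frac12\sinh(2w)=0$. Then there exists a $1$-parameter family of minimal immersions $\Phi_t:\mathbb{C}\rightarrow\mathbb{S}^2\times\mathbb{S}^2$, $t\in\mathbb{R}$, without complex points, whose induced metric is $4\cosh(v+w)\cosh(v-w)|dz|^2$, whose Kähler functions are $C_1=\tanh(v-w)$ and $C_2=\tanh(v+w)$, and whose Hopf $2$-differentials are $\Theta_t=e^{it}dz\otimes dz$.
   Context: $\mathbb{S}^2\subset\mathbb{R}^3$ has standard metric, complex structure $J$ ($J_xv=x\times v$), Kähler form $\omega=\langle J\cdot,\cdot\rangle$. $\mathbb{S}^2\times\mathbb{S}^2$ has the product metric, $J_1=(J,J)$, $J_2=(J,-J)$, Kähler forms $\omega_1=\pi_1^*\omega+\pi_2^*\omega$, $\omega_2=\pi_1^*\omega-\pi_2^*\omega$, orientation $\pi_1^*\omega\wedge\pi_2^*\omega$. Kähler functions: $\Phi^*\omega_j=C_j\omega_\Sigma$; complex points: where $C_1^2=1$ or $C_2^2=1$. The Hopf $2$-differential of a minimal immersion $\Phi$ is $\Theta=\frac12\langle J_1\Phi_z,J_2\Phi_z\rangle\,dz\otimes dz$ for a conformal parameter $z$, $\langle\cdot,\cdot\rangle$ extended complex-bilinearly, $\partial_z=\frac12(\partial_x-i\partial_y)$. *)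

theory Defs
  imports "HOL-Analysis.Analysis"
begin

text \<open>Points of S2 x S2 live in R3 x R3 (product inner product = product metric).
  The parameter domain is C = R2, z = x + i y.\<close>

type_synonym pt = "(real^3) \<times> (real^3)"

definition dx :: "(complex \<Rightarrow> 'a::real_normed_vector) \<Rightarrow> complex \<Rightarrow> 'a" where
  "dx f z = frechet_derivative f (at z) 1"

definition dy :: "(complex \<Rightarrow> 'a::real_normed_vector) \<Rightarrow> complex \<Rightarrow> 'a" where
  "dy f z = frechet_derivative f (at z) \<i>"

definition C2 :: "(complex \<Rightarrow> 'a::real_normed_vector) \<Rightarrow> bool" where
  "C2 f \<longleftrightarrow> (\<forall>z. f differentiable at z) \<and>
     (\<forall>z. dx f differentiable at z \<and> dy f differentiable at z) \<and>
     continuous_on UNIV (dx f) \<and> continuous_on UNIV (dy f) \<and>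
     continuous_on UNIV (dx (dx f)) \<and> continuous_on UNIV (dy (dx f)) \<and>
     continuous_on UNIV (dx (dy f)) \<and> continuous_on UNIV (dy (dy f))"

text \<open>sinh-Gordon equation u_{z zbar} + 1/2 sinh(2u) = 0, with u_{z zbar} = (u_xx + u_yy)/4.\<close>
definition sinh_gordon :: "(complex \<Rightarrow> real) \<Rightarrow> bool" where
  "sinh_gordon u \<longleftrightarrow> C2 u \<and>
     (\<forall>z. (dx (dx u) z + dy (dy u) z) / 4 + sinh (2 * u z) / 2 = 0)"

definition in_S2xS2 :: "pt \<Rightarrow> bool" where
  "in_S2xS2 p \<longleftrightarrow> norm (fst p) = 1 \<and> norm (snd p) = 1"

text \<open>Complex structures J1 = (J,J), J2 = (J,-J), J_x v = x \<times> v.\<close>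
definition J1 :: "pt \<Rightarrow> pt \<Rightarrow> pt" where
  "J1 p u = (cross3 (fst p) (fst u), cross3 (snd p) (snd u))"

definition J2 :: "pt \<Rightarrow> pt \<Rightarrow> pt" where
  "J2 p u = (cross3 (fst p) (fst u), - cross3 (snd p) (snd u))"

definition tang_proj :: "pt \<Rightarrow> pt \<Rightarrow> pt" where
  "tang_proj p a = (fst a - (fst a \<bullet> fst p) *\<^sub>R fst p, snd a - (snd a \<bullet> snd p) *\<^sub>R snd p)"

definition conformal_immersion_metric :: "(complex \<Rightarrow> pt) \<Rightarrow> (complex \<Rightarrow> real) \<Rightarrow> bool" where
  "conformal_immersion_metric \<Phi> lam \<longleftrightarrow> C2 \<Phi> \<and> (\<forall>z. in_S2xS2 (\<Phi> z)) \<and>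
     (\<forall>z. inj (frechet_derivative \<Phi> (at z))) \<and>
     (\<forall>z. lam z > 0 \<and> dx \<Phi> z \<bullet> dx \<Phi> z = lam z \<and> dy \<Phi> z \<bullet> dy \<Phi> z = lam z
          \<and> dx \<Phi> z \<bullet> dy \<Phi> z = 0)"

text \<open>Mean curvature vector of a conformal immersion with metric lam |dz|^2 in S2 x S2:
  tangential (to S2 x S2) part of the Laplace-Beltrami of Phi, (Phi_xx + Phi_yy)/lam.\<close>
definition mean_curvature :: "(complex \<Rightarrow> pt) \<Rightarrow> (complex \<Rightarrow> real) \<Rightarrow> complex \<Rightarrow> pt" where
  "mean_curvature \<Phi> lam z =
     tang_proj (\<Phi> z) ((1 / lam z) *\<^sub>R (dx (dx \<Phi>) z + dy (dy \<Phi>) z))"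

definition minimal_conformal_immersion :: "(complex \<Rightarrow> pt) \<Rightarrow> (complex \<Rightarrow> real) \<Rightarrow> bool" where
  "minimal_conformal_immersion \<Phi> lam \<longleftrightarrow> conformal_immersion_metric \<Phi> lam \<and>
     (\<forall>z. mean_curvature \<Phi> lam z = 0)"

text \<open>Kaehler functions: Phi^* omega_j = C_j omega_Sigma, where
  omega_j(u,v) = <J_j u, v> and omega_Sigma(d_x,d_y) = lam (area form, orientation dx \<and> dy).\<close>
definition kaehler1 :: "(complex \<Rightarrow> pt) \<Rightarrow> (complex \<Rightarrow> real) \<Rightarrow> complex \<Rightarrow> real" where
  "kaehler1 \<Phi> lam z = (J1 (\<Phi> z) (dx \<Phi> z) \<bullet> dy \<Phi> z) / lam z"

definition kaehler2 :: "(complex \<Rightarrow> pt) \<Rightarrow> (complex \<Rightarrow> real) \<Rightarrow> complex \<Rightarrow> real" where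
  "kaehler2 \<Phi> lam z = (J2 (\<Phi> z) (dx \<Phi> z) \<bullet> dy \<Phi> z) / lam z"

text \<open>Complex-bilinear extension of the inner product; a complex vector a + i b is a pair (a,b).\<close>
definition cinner :: "pt \<times> pt \<Rightarrow> pt \<times> pt \<Rightarrow> complex" where
  "cinner u v = Complex (fst u \<bullet> fst v - snd u \<bullet> snd v) (fst u \<bullet> snd v + snd u \<bullet> fst v)"

text \<open>Phi_z = (Phi_x - i Phi_y)/2, as a pair (real part, imaginary part).\<close>
definition dz :: "(complex \<Rightarrow> pt) \<Rightarrow> complex \<Rightarrow> pt \<times> pt" where
  "dz \<Phi> z = ((1/2) *\<^sub>R dx \<Phi> z, - (1/2) *\<^sub>R dy \<Phi> z)"

text \<open>Coefficient of the Hopf differential Theta = 1/2 <J1 Phi_z, J2 Phi_z> dz \<otimes> dz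
  (J_j extended complex-linearly).\<close>
definition hopf :: "(complex \<Rightarrow> pt) \<Rightarrow> complex \<Rightarrow> complex" where
  "hopf \<Phi> z = (1/2) * cinner
      (J1 (\<Phi> z) (fst (dz \<Phi> z)), J1 (\<Phi> z) (snd (dz \<Phi> z)))
      (J2 (\<Phi> z) (fst (dz \<Phi> z)), J2 (\<Phi> z) (snd (dz \<Phi> z)))"

end

theory Submission
  imports Defs
begin
type_synonym mat3 = "real^3^3"

lemma norm_mat_entry: "\<bar>(A::mat3)$i$j\<bar> \<le> norm A"
  using component_le_norm_cart[where x="A$i" and i=j] Finite_Cartesian_Product.norm_nth_le[where x=A and i=i] by linarith

lemma norm_mmult_le: "norm ((A::mat3) ** (B::mat3)) \<le> 27 * norm A * norm B"
proof -
  have e: "\<bar>(A ** B)$i$j\<bar> \<le> 3 * (norm A * norm B)" for i j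
  proof -
    have "\<bar>(A ** B)$i$j\<bar> = \<bar>\<Sum>k\<in>UNIV. A$i$k * B$k$j\<bar>" by (simp add: matrix_matrix_mult_def)
    also have "\<dots> \<le> (\<Sum>k\<in>(UNIV::3 set). \<bar>A$i$k\<bar> * \<bar>B$k$j\<bar>)"
      by (metis (no_types, lifting) abs_mult sum.cong sum_abs)
    also have "\<dots> \<le> (\<Sum>k\<in>(UNIV::3 set). norm A * norm B)"
      proof (intro sum_mono mult_mono)
      fix k show "\<bar>A$i$k\<bar> \<le> norm A" "\<bar>B$k$j\<bar> \<le> norm B" by (rule norm_mat_entry)+
    qed auto
    finally show ?thesis by simp
  qed
  have r: "norm ((A ** B)$i) \<le> 9 * (norm A * norm B)" for i
  proof -
    have "norm ((A ** B)$i) \<le> (\<Sum>j\<in>(UNIV::3 set). \<bar>(A ** B)$i$j\<bar>)" by (rule norm_le_l1_cart)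
    also have "\<dots> \<le> (\<Sum>j\<in>(UNIV::3 set). 3 * (norm A * norm B))" by (intro sum_mono e)
    finally show ?thesis by simp
  qed
  have "norm (A ** B) \<le> (\<Sum>i\<in>(UNIV::3 set). norm ((A ** B)$i))" by (simp add: norm_vec_def L2_set_le_sum)
  also have "\<dots> \<le> (\<Sum>i\<in>(UNIV::3 set). 9 * (norm A * norm B))" by (intro sum_mono r)
  finally show ?thesis by simp
qed

lemma mmult_rdistrib: "((A::mat3) + B) ** C = A ** C + B ** C"
  by (simp add: matrix_matrix_mult_def vec_eq_iff sum.distrib[symmetric] distrib_right)

lemma ex27: "\<exists>K. \<forall>(a::mat3) (b::mat3). norm (a ** b) \<le> norm a * norm b * K"
proof (rule exI[where x=27], intro allI)
  fix a b :: mat3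
  show "norm (a ** b) \<le> norm a * norm b * 27" using norm_mmult_le[of a b] by (simp add: mult_ac)
qed

lemma bounded_bilinear_mmult: "bounded_bilinear ((**) :: mat3 \<Rightarrow> mat3 \<Rightarrow> mat3)"
  unfolding bounded_bilinear_def
proof (intro conjI allI)
  fix a a' b b' :: mat3 and r :: real
  show "(a + a') ** b = a ** b + a' ** b" by (rule mmult_rdistrib)
  show "a ** (b + b') = a ** b + a ** b'" by (rule matrix_add_ldistrib)
  show "(r *\<^sub>R a) ** b = r *\<^sub>R (a ** b)" by (simp add: scalar_matrix_assoc)
  show "a ** (r *\<^sub>R b) = r *\<^sub>R (a ** b)"
    by (simp add: matrix_scalar_ac scalar_matrix_assoc)
next
  show "\<exists>K. \<forall>(a::mat3) (b::mat3). norm (a ** b) \<le> norm a * norm b * K"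
    using ex27 by blast
qed


definition sint :: "(real \<Rightarrow> 'a::euclidean_space) \<Rightarrow> real \<Rightarrow> 'a" where
  "sint f y = y *\<^sub>R integral {0..1} (\<lambda>t. f (t * y))"

lemma sint_zero[simp]: "sint f 0 = 0"
  by (simp add: sint_def)

lemma sint_eq:
  assumes f: "continuous_on UNIV f"
  shows "sint f y = integral {0..y} f - integral {y..0} f"
proof -
  have "((\<lambda>t. y *\<^sub>R f (t * y)) has_integral (integral {0 * y..1 * y} f - integral {1 * y..0 * y} f)) {0..1}"
  proof (rule has_integral_substitution_general[where s="{}" and c="-\<bar>y\<bar>" and d="\<bar>y\<bar>"])
    show "(\<lambda>t. t * y) ` {0..1} \<subseteq> {- \<bar>y\<bar>..\<bar>y\<bar>}"
    proof
      fix u assume "u \<in> (\<lambda>t. t * y) ` {0..1}"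
      then obtain t where t: "t \<in> {0..1}" "u = t * y" by auto
      have "\<bar>t * y\<bar> \<le> \<bar>y\<bar>" using t by (simp add: abs_mult mult_left_le_one_le)
      then show "u \<in> {- \<bar>y\<bar>..\<bar>y\<bar>}" using t by auto
    qed
    show "continuous_on {- \<bar>y\<bar>..\<bar>y\<bar>} f" using f by (rule continuous_on_subset) auto
    show "continuous_on {0..1} (\<lambda>t. t * y)" by (intro continuous_intros)
    show "((\<lambda>t. t * y) has_real_derivative y) (at x within {0..1})" for x
      by (auto intro!: derivative_eq_intros)
  qed auto
  then have h: "((\<lambda>t. y *\<^sub>R f (t * y)) has_integral (integral {0..y} f - integral {y..0} f)) {0..1}"
    by simp
  have "integral {0..1} (\<lambda>t. y *\<^sub>R f (t * y)) = integral {0..y} f - integral {y..0} f"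
    by (rule integral_unique[OF h])
  then show ?thesis by (simp add: sint_def)
qed

lemma sint_eq_base:
  assumes f: "continuous_on UNIV f" and a: "a \<le> 0" "a \<le> y"
  shows "sint f y = integral {a..y} f - integral {a..0} f"
proof -
  have int: "f integrable_on {a..b}" for b
    using f by (intro integrable_continuous_real) (rule continuous_on_subset, auto)
  show ?thesis
  proof (cases "0 \<le> y")
    case True
    have "integral {a..0} f + integral {0..y} f = integral {a..y} f"
      by (rule Henstock_Kurzweil_Integration.integral_combine) (use True a int in auto)
    moreover have "integral {y..0} f = 0"
      using True by (cases "y = 0") auto
    ultimately show ?thesis using sint_eq[OF f, of y] by (simp add: algebra_simps)
  next
    case False
    have "integral {a..y} f + integral {y..0} f = integral {a..0} f"
      by (rule Henstock_Kurzweil_Integration.integral_combine) (use False a int in auto)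
    moreover have "integral {0..y} f = 0"
      using False by auto
    ultimately show ?thesis using sint_eq[OF f, of y] by (simp add: algebra_simps)
  qed
qed

lemma sint_deriv:
  assumes f: "continuous_on UNIV f"
  shows "(sint f has_vector_derivative f y) (at y)"
proof -
  define a where "a = min 0 y - 1"
  have d: "((\<lambda>u. integral {a..u} f) has_vector_derivative f y) (at y within {a..y+1})"
    by (rule integral_has_vector_derivative) (use f continuous_on_subset a_def in auto)
  have "((\<lambda>u. integral {a..u} f) has_vector_derivative f y) (at y)"
  proof -
    have "y \<in> interior {a..y+1}" unfolding a_def by auto
    then have "at y within {a..y+1} = at y" by (rule at_within_interior)
    with d show ?thesis by simp
  qed
  then have "((\<lambda>u. integral {a..u} f - integral {a..0} f) has_vector_derivative f y) (at y)"
    by (auto intro!: derivative_eq_intros)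
  then show ?thesis
  proof (rule has_vector_derivative_transform_within_open[where S="{a<..}"])
    show "open {a<..}" by simp
    show "y \<in> {a<..}" by (simp add: a_def)
    fix u assume "u \<in> {a<..}"
    then show "integral {a..u} f - integral {a..0} f = sint f u"
      by (intro sint_eq_base[OF f, symmetric]) (auto simp: a_def)
  qed
qed

lemma sint_cont:
  assumes g: "continuous_on UNIV (\<lambda>(x, y). g x y)"
  shows "continuous_on UNIV (\<lambda>(x, y). sint (g x) y)"
proof -
  have c: "continuous_on (UNIV \<times> cbox 0 1) (\<lambda>(p, t). g (fst p) (t * snd p))"
  proof -
    have "continuous_on (UNIV \<times> cbox 0 1) ((\<lambda>(x, y). g x y) \<circ> (\<lambda>(p, t). (fst p, t * snd p)))"
      by (intro continuous_on_compose continuous_on_subset[OF g]) (auto simp: split_beta intro!: continuous_intros)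
    then show ?thesis by (simp add: o_def split_beta)
  qed
  have "continuous_on UNIV (\<lambda>p. integral (cbox 0 1) (\<lambda>t. g (fst p) (t * snd p)))"
    using integral_continuous_on_param[OF c] by simp
  then have "continuous_on UNIV (\<lambda>p. snd p *\<^sub>R integral {0..1} (\<lambda>t. g (fst p) (t * snd p)))"
    by (auto intro!: continuous_intros)
  then show ?thesis by (simp add: sint_def split_beta)
qed

lemma cont_slice:
  assumes g: "continuous_on UNIV (\<lambda>(x, y). g x y)"
  shows "continuous_on UNIV (g x)" "continuous_on UNIV (\<lambda>x. g x y)"
proof -
  have "continuous_on UNIV ((\<lambda>(x, y). g x y) \<circ> (\<lambda>t. (x, t)))"
    by (intro continuous_on_compose continuous_on_subset[OF g]) (auto intro!: continuous_intros)
  then show "continuous_on UNIV (g x)" by (simp add: o_def)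
  have "continuous_on UNIV ((\<lambda>(x, y). g x y) \<circ> (\<lambda>t. (t, y)))"
    by (intro continuous_on_compose continuous_on_subset[OF g]) (auto intro!: continuous_intros)
  then show "continuous_on UNIV (\<lambda>x. g x y)" by (simp add: o_def)
qed

lemma sint_leibniz:
  assumes gx: "\<And>x t. ((\<lambda>x. g x t) has_vector_derivative gx x t) (at x)"
    and c: "continuous_on UNIV (\<lambda>(x, y). gx x y)"
    and g: "continuous_on UNIV (\<lambda>(x, y). g x y)"
  shows "((\<lambda>x. sint (g x) y) has_vector_derivative sint (gx x) y) (at x)"
proof -
  have c2: "continuous_on (UNIV \<times> cbox 0 1) (\<lambda>(x, t). gx x (t * y))"
  proof -
    have "continuous_on (UNIV \<times> cbox 0 1) ((\<lambda>(x, y). gx x y) \<circ> (\<lambda>(x, t). (x, t * y)))"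
      by (intro continuous_on_compose continuous_on_subset[OF c]) (auto simp: split_beta intro!: continuous_intros)
    then show ?thesis by (simp add: o_def split_beta)
  qed
  have i: "(\<lambda>t. g x (t * y)) integrable_on cbox 0 1" for x
  proof -
    have "continuous_on UNIV ((g x) \<circ> (\<lambda>t. t * y))"
      by (intro continuous_on_compose continuous_on_subset[OF cont_slice(1)[OF g]]) (auto intro!: continuous_intros)
    then show ?thesis by (intro integrable_continuous) (auto simp: o_def intro: continuous_on_subset)
  qed
  have "((\<lambda>x. integral (cbox 0 1) (\<lambda>t. g x (t * y))) has_vector_derivative integral (cbox 0 1) (\<lambda>t. gx x (t * y))) (at x within UNIV)"
    by (rule leibniz_rule_vector_derivative[OF _ i c2]) (auto intro: gx)
  then have "((\<lambda>x. y *\<^sub>R integral (cbox 0 1) (\<lambda>t. g x (t * y))) has_vector_derivative y *\<^sub>R integral (cbox 0 1) (\<lambda>t. gx x (t * y))) (at x)"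
    by (auto intro!: derivative_eq_intros)
  then show ?thesis by (simp add: sint_def)
qed

lemma integral_power01: "((\<lambda>t::real. t ^ n) has_integral 1 / (Suc n)) {0..1}"
proof -
  have "((\<lambda>t::real. t ^ n) has_integral (1::real) ^ Suc n / Suc n - 0 ^ Suc n / Suc n) {0..1}"
  proof (rule fundamental_theorem_of_calculus)
    fix x :: real
    have "((\<lambda>t. t ^ Suc n) has_real_derivative (1 + real n) * (1 * x ^ n)) (at x within {0..1})"
      by (rule DERIV_power_Suc) (rule DERIV_ident)
    then have "((\<lambda>t. t ^ Suc n / real (Suc n)) has_real_derivative (1 + real n) * (1 * x ^ n) / real (Suc n)) (at x within {0..1})"
      by (rule DERIV_cdivide)
    then show "((\<lambda>t. t ^ Suc n / real (Suc n)) has_vector_derivative x ^ n) (at x within {0..1})"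
      by (simp add: has_real_derivative_iff_has_vector_derivative[symmetric])
  qed simp
  then show ?thesis by simp
qed

lemma sint_bound:
  assumes f: "continuous_on UNIV f"
    and b: "\<And>t. t \<in> {0..1} \<Longrightarrow> norm (f (t * y)) \<le> K * (t * \<bar>y\<bar>) ^ n"
  shows "norm (sint f y) \<le> K * \<bar>y\<bar> ^ Suc n / Suc n"
proof -
  have i: "(\<lambda>t. f (t * y)) integrable_on {0..1}"
  proof -
    have "continuous_on UNIV (f \<circ> (\<lambda>t. t * y))"
      by (intro continuous_on_compose continuous_on_subset[OF f]) (auto intro!: continuous_intros)
    then show ?thesis by (intro integrable_continuous_real) (auto simp: o_def intro: continuous_on_subset)
  qed
  have gi: "((\<lambda>t. (K * \<bar>y\<bar> ^ n) * t ^ n) has_integral (K * \<bar>y\<bar> ^ n) * (1 / Suc n)) {0..1}"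
    by (intro has_integral_mult_right integral_power01)
  have "norm (integral {0..1} (\<lambda>t. f (t * y))) \<le> integral {0..1} (\<lambda>t. (K * \<bar>y\<bar> ^ n) * t ^ n)"
  proof (rule integral_norm_bound_integral[OF i])
    show "(\<lambda>t. (K * \<bar>y\<bar> ^ n) * t ^ n) integrable_on {0..1}" using gi by blast
    fix t :: real assume "t \<in> {0..1}"
    then show "norm (f (t * y)) \<le> (K * \<bar>y\<bar> ^ n) * t ^ n"
      using b[of t] by (simp add: power_mult_distrib mult_ac)
  qed
  also have "\<dots> = K * \<bar>y\<bar> ^ n / Suc n" using integral_unique[OF integral_power01[of n]] by simp
  finally have "\<bar>y\<bar> * norm (integral {0..1} (\<lambda>t. f (t * y))) \<le> \<bar>y\<bar> * (K * \<bar>y\<bar> ^ n / Suc n)"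
    by (intro mult_left_mono) auto
  then show ?thesis by (simp add: sint_def mult_ac)
qed


lemma series_vderiv:
  fixes f :: "nat \<Rightarrow> real \<Rightarrow> 'a::banach"
  assumes d: "\<And>n x. x \<in> {a<..<b} \<Longrightarrow> (f n has_vector_derivative f' n x) (at x)"
    and bd: "\<And>n x. x \<in> {a<..<b} \<Longrightarrow> norm (f' n x) \<le> M n" and sM: "summable M"
    and sf: "\<And>x. x \<in> {a<..<b} \<Longrightarrow> summable (\<lambda>n. f n x)"
    and x0: "x0 \<in> {a<..<b}"
  shows "((\<lambda>x. \<Sum>n. f n x) has_vector_derivative (\<Sum>n. f' n x0)) (at x0)"
proof -
  define S where "S = {a<..<b}"
  have ul: "uniform_limit S (\<lambda>n x. \<Sum>i<n. f' i x) (\<lambda>x. \<Sum>i. f' i x) sequentially"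
    unfolding S_def by (rule Weierstrass_m_test[OF bd sM])
  have "\<exists>g. \<forall>x\<in>S. (\<lambda>n. f n x) sums g x \<and> (g has_derivative (\<lambda>h. h *\<^sub>R (\<Sum>i. f' i x))) (at x within S)"
  proof (rule has_derivative_series[where x=x0])
    show "convex S" by (simp add: S_def)
    show "(f n has_derivative (\<lambda>h. h *\<^sub>R f' n x)) (at x within S)" if "x \<in> S" for n x
      using d[of x n] that by (auto simp: S_def has_vector_derivative_def intro: has_derivative_at_withinI)
    show "x0 \<in> S" using x0 by (simp add: S_def)
    show "(\<lambda>n. f n x0) sums (\<Sum>n. f n x0)" using sf[OF x0] by (simp add: summable_sums)
    show "\<forall>\<^sub>F n in sequentially. \<forall>x\<in>S. \<forall>h. norm ((\<Sum>i<n. h *\<^sub>R f' i x) - h *\<^sub>R (\<Sum>i. f' i x)) \<le> e * norm h"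
      if "e > 0" for e
    proof -
      from that ul obtain N where N: "\<And>n x. n \<ge> N \<Longrightarrow> x \<in> S \<Longrightarrow> dist (\<Sum>i<n. f' i x) (\<Sum>i. f' i x) < e"
        unfolding uniform_limit_iff eventually_at_top_linorder by blast
      show ?thesis unfolding eventually_at_top_linorder
      proof (intro exI allI impI ballI)
        fix n x h assume nx: "n \<ge> N" "x \<in> S"
        have "norm ((\<Sum>i<n. h *\<^sub>R f' i x) - h *\<^sub>R (\<Sum>i. f' i x)) = \<bar>h\<bar> * norm ((\<Sum>i<n. f' i x) - (\<Sum>i. f' i x))"
          by (simp add: scaleR_sum_right[symmetric] scaleR_diff_right[symmetric])
        also have "\<dots> \<le> \<bar>h\<bar> * e" using N[OF nx] by (intro mult_left_mono) (auto simp: dist_norm)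
        finally show "norm ((\<Sum>i<n. h *\<^sub>R f' i x) - h *\<^sub>R (\<Sum>i. f' i x)) \<le> e * norm h" by (simp add: mult_ac)
      qed
    qed
  qed
  then obtain g where g: "\<And>x. x \<in> S \<Longrightarrow> (\<lambda>n. f n x) sums g x"
    "\<And>x. x \<in> S \<Longrightarrow> (g has_derivative (\<lambda>h. h *\<^sub>R (\<Sum>i. f' i x))) (at x within S)" by blast
  have "(g has_vector_derivative (\<Sum>i. f' i x0)) (at x0)"
  proof -
    have "x0 \<in> interior S" using x0 by (simp add: S_def)
    then have "at x0 within S = at x0" by (rule at_within_interior)
    with g(2)[of x0] x0 show ?thesis by (simp add: S_def has_vector_derivative_def)
  qed
  then show ?thesis
  proof (rule has_vector_derivative_transform_within_open[where S=S])
    show "open S" "x0 \<in> S" using x0 by (auto simp: S_def)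
    show "g y = (\<Sum>n. f n y)" if "y \<in> S" for y using g(1)[OF that] by (simp add: sums_iff)
  qed
qed

lemmas mm_cont = bounded_bilinear.continuous_on[OF bounded_bilinear_mmult]
lemmas mm_deriv = bounded_bilinear.has_vector_derivative[OF bounded_bilinear_mmult]

lemma cont2_mm:
  "continuous_on UNIV (\<lambda>(x, y). f x y) \<Longrightarrow> continuous_on UNIV (\<lambda>(x, y). g x y) \<Longrightarrow>
   continuous_on UNIV (\<lambda>(x, y). (f x y :: mat3) ** (g x y :: mat3))"
  using mm_cont[of UNIV "\<lambda>(x, y). f x y" "\<lambda>(x, y). g x y"] by (simp add: case_prod_unfold)

lemma cont2_add:
  "continuous_on UNIV (\<lambda>(x, y). f x y) \<Longrightarrow> continuous_on UNIV (\<lambda>(x, y). g x y) \<Longrightarrow>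
   continuous_on UNIV (\<lambda>(x, y). (f x y :: 'a::real_normed_vector) + g x y)"
  using continuous_on_add[of UNIV "\<lambda>(x, y). f x y" "\<lambda>(x, y). g x y"] by (simp add: case_prod_unfold)

lemma summable_expbound: "summable (\<lambda>n. c * (z::real) ^ n / fact n)"
proof -
  have "summable (\<lambda>n. c * (inverse (fact n) * z ^ n))" by (intro summable_mult summable_exp)
  then show ?thesis by (simp add: field_simps)
qed


locale pfam =
  fixes B Bx :: "real \<Rightarrow> real \<Rightarrow> mat3"
  assumes contB: "continuous_on UNIV (\<lambda>(x, y). B x y)"
    and contBx: "continuous_on UNIV (\<lambda>(x, y). Bx x y)"
    and derB: "\<And>x y. ((\<lambda>x. B x y) has_vector_derivative Bx x y) (at x)"
begin

fun P :: "nat \<Rightarrow> real \<Rightarrow> real \<Rightarrow> mat3" where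
  "P 0 x y = mat 1"
| "P (Suc n) x y = sint (\<lambda>s. P n x s ** B x s) y"

fun Q :: "nat \<Rightarrow> real \<Rightarrow> real \<Rightarrow> mat3" where
  "Q 0 x y = 0"
| "Q (Suc n) x y = sint (\<lambda>s. Q n x s ** B x s + P n x s ** Bx x s) y"

lemma PQ_basic:
  "continuous_on UNIV (\<lambda>(x, y). P n x y) \<and> continuous_on UNIV (\<lambda>(x, y). Q n x y) \<and>
   (\<forall>x y. ((\<lambda>x. P n x y) has_vector_derivative Q n x y) (at x))"
proof (induction n)
  case 0
  then show ?case by (auto intro!: continuous_intros derivative_eq_intros)
next
  case (Suc n)
  then have cP: "continuous_on UNIV (\<lambda>(x, y). P n x y)" and cQ: "continuous_on UNIV (\<lambda>(x, y). Q n x y)"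
    and dP: "\<And>x y. ((\<lambda>x. P n x y) has_vector_derivative Q n x y) (at x)" by auto
  have c1: "continuous_on UNIV (\<lambda>(x, y). P n x y ** B x y)" by (rule cont2_mm[OF cP contB])
  have c2: "continuous_on UNIV (\<lambda>(x, y). Q n x y ** B x y + P n x y ** Bx x y)"
    by (intro cont2_add cont2_mm cP cQ contB contBx)
  have d: "((\<lambda>x. P n x s ** B x s) has_vector_derivative Q n x s ** B x s + P n x s ** Bx x s) (at x)" for x s
    using mm_deriv[OF dP[where x=x and y=s] derB[where x=x and y=s]] by (simp add: add.commute)
  show ?case
  proof (intro conjI allI)
    show "continuous_on UNIV (\<lambda>(x, y). P (Suc n) x y)"
      using sint_cont[OF c1] by simp
    show "continuous_on UNIV (\<lambda>(x, y). Q (Suc n) x y)"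
      using sint_cont[OF c2] by simp
    fix x y
    show "((\<lambda>x. P (Suc n) x y) has_vector_derivative Q (Suc n) x y) (at x)"
      using sint_leibniz[where g="\<lambda>x s. P n x s ** B x s", OF d c2 c1] by simp
  qed
qed

lemma contP: "continuous_on UNIV (\<lambda>(x, y). P n x y)" using PQ_basic by blast
lemma contQ: "continuous_on UNIV (\<lambda>(x, y). Q n x y)" using PQ_basic by blast
lemma derPx: "((\<lambda>x. P n x y) has_vector_derivative Q n x y) (at x)" using PQ_basic by blast

lemma derPy: "((\<lambda>y. P (Suc n) x y) has_vector_derivative P n x y ** B x y) (at y)"
proof -
  have "continuous_on UNIV (\<lambda>s. P n x s ** B x s)"
    using cont_slice(1)[OF cont2_mm[OF contP contB]] by simp
  from sint_deriv[OF this] show ?thesis by simp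
qed

lemma derQy: "((\<lambda>y. Q (Suc n) x y) has_vector_derivative Q n x y ** B x y + P n x y ** Bx x y) (at y)"
proof -
  have "continuous_on UNIV (\<lambda>s. Q n x s ** B x s + P n x s ** Bx x s)"
    using cont_slice(1)[OF cont2_add[OF cont2_mm[OF contQ contB] cont2_mm[OF contP contBx]]] by simp
  from sint_deriv[OF this] show ?thesis by simp
qed

lemma local_bound: "\<exists>M\<ge>0. \<forall>x y. \<bar>x\<bar> \<le> R \<longrightarrow> \<bar>y\<bar> \<le> R \<longrightarrow> norm (B x y) \<le> M \<and> norm (Bx x y) \<le> M"
proof -
  define K where "K = {-R..R} \<times> {-R..R}"
  have cK: "compact K" unfolding K_def by (intro compact_Times compact_Icc)
  have "bounded ((\<lambda>(x, y). B x y) ` K)"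
    by (intro compact_imp_bounded compact_continuous_image continuous_on_subset[OF contB] cK) auto
  then obtain a where a: "\<forall>p\<in>K. norm ((\<lambda>(x, y). B x y) p) \<le> a" unfolding bounded_iff by blast
  have "bounded ((\<lambda>(x, y). Bx x y) ` K)"
    by (intro compact_imp_bounded compact_continuous_image continuous_on_subset[OF contBx] cK) auto
  then obtain b where b: "\<forall>p\<in>K. norm ((\<lambda>(x, y). Bx x y) p) \<le> b" unfolding bounded_iff by blast
  show ?thesis
  proof (intro exI[of _ "max 0 (max a b)"] conjI allI impI)
    fix x y assume "\<bar>x\<bar> \<le> R" "\<bar>y\<bar> \<le> R"
    then have "(x, y) \<in> K" by (auto simp: K_def)
    from a[rule_format, OF this] b[rule_format, OF this] show "norm (B x y) \<le> max 0 (max a b)" "norm (Bx x y) \<le> max 0 (max a b)" by auto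
  qed auto
qed

definition "c0 = norm (mat 1 :: mat3)"

lemma PQ_bound:
  assumes M: "0 \<le> M" "\<And>x y. \<bar>x\<bar> \<le> R \<Longrightarrow> \<bar>y\<bar> \<le> R \<Longrightarrow> norm (B x y) \<le> M \<and> norm (Bx x y) \<le> M"
    and x: "\<bar>x\<bar> \<le> R"
  shows "\<bar>y\<bar> \<le> R \<Longrightarrow> norm (P n x y) \<le> c0 * (27 * M * \<bar>y\<bar>) ^ n / fact n \<and>
    norm (Q n x y) \<le> c0 * n * (27 * M * \<bar>y\<bar>) ^ n / fact n"
proof (induction n arbitrary: y)
  case 0
  then show ?case by (simp add: c0_def)
next
  case (Suc n)
  have c0: "c0 \<ge> 0" by (simp add: c0_def)
  have IH: "norm (P n x (t * y)) \<le> c0 * (27 * M) ^ n * (t * \<bar>y\<bar>) ^ n / fact n \<and>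
      norm (Q n x (t * y)) \<le> c0 * n * (27 * M) ^ n * (t * \<bar>y\<bar>) ^ n / fact n"
    and BM: "norm (B x (t * y)) \<le> M \<and> norm (Bx x (t * y)) \<le> M" if t: "t \<in> {0..1}" for t
  proof -
    have ty: "\<bar>t * y\<bar> = t * \<bar>y\<bar>" "\<bar>t * y\<bar> \<le> R" using t Suc.prems
      by (auto simp: abs_mult intro: order_trans[OF mult_left_le_one_le])
    show "norm (B x (t * y)) \<le> M \<and> norm (Bx x (t * y)) \<le> M" using M(2)[OF x ty(2)] .
    show "norm (P n x (t * y)) \<le> c0 * (27 * M) ^ n * (t * \<bar>y\<bar>) ^ n / fact n \<and>
      norm (Q n x (t * y)) \<le> c0 * n * (27 * M) ^ n * (t * \<bar>y\<bar>) ^ n / fact n"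
      using Suc.IH[OF ty(2)] unfolding ty(1) by (simp add: power_mult_distrib mult_ac)
  qed
  have fs: "fact (Suc n) = real (Suc n) * fact n" by simp
  have "norm (P (Suc n) x y) \<le> (c0 * (27 * M) ^ Suc n / fact n) * \<bar>y\<bar> ^ Suc n / Suc n"
  proof (simp only: P.simps, rule sint_bound)
    show "continuous_on UNIV (\<lambda>s. P n x s ** B x s)"
      using cont_slice(1)[OF cont2_mm[OF contP contB]] by simp
    fix t :: real assume t: "t \<in> {0..1}"
    have "norm (P n x (t * y) ** B x (t * y)) \<le> 27 * norm (P n x (t * y)) * norm (B x (t * y))"
      by (rule norm_mmult_le)
    also have "\<dots> \<le> 27 * (c0 * (27 * M) ^ n * (t * \<bar>y\<bar>) ^ n / fact n) * M"
      using IH[OF t] BM[OF t] c0 M(1) t by (intro mult_mono) auto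
    also have "\<dots> = (c0 * (27 * M) ^ Suc n / fact n) * (t * \<bar>y\<bar>) ^ n" by (simp add: field_simps)
    finally show "norm (P n x (t * y) ** B x (t * y)) \<le> (c0 * (27 * M) ^ Suc n / fact n) * (t * \<bar>y\<bar>) ^ n" .
  qed
  also have "\<dots> = c0 * (27 * M * \<bar>y\<bar>) ^ Suc n / fact (Suc n)"
    unfolding fs by (simp add: field_simps power_mult_distrib)
  finally have bP: "norm (P (Suc n) x y) \<le> c0 * (27 * M * \<bar>y\<bar>) ^ Suc n / fact (Suc n)" .
  have "norm (Q (Suc n) x y) \<le> (c0 * Suc n * (27 * M) ^ Suc n / fact n) * \<bar>y\<bar> ^ Suc n / Suc n"
  proof (simp only: Q.simps, rule sint_bound)
    show "continuous_on UNIV (\<lambda>s. Q n x s ** B x s + P n x s ** Bx x s)"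
      using cont_slice(1)[OF cont2_add[OF cont2_mm[OF contQ contB] cont2_mm[OF contP contBx]]] by simp
    fix t :: real assume t: "t \<in> {0..1}"
    let ?p = "c0 * (27 * M) ^ n * (t * \<bar>y\<bar>) ^ n / fact n"
    have "norm (Q n x (t * y) ** B x (t * y) + P n x (t * y) ** Bx x (t * y))
        \<le> 27 * norm (Q n x (t * y)) * norm (B x (t * y)) + 27 * norm (P n x (t * y)) * norm (Bx x (t * y))"
      by (rule order_trans[OF norm_triangle_ineq add_mono[OF norm_mmult_le norm_mmult_le]])
    also have "\<dots> \<le> 27 * (n * ?p) * M + 27 * ?p * M"
      using IH[OF t] BM[OF t] c0 M(1) t by (intro add_mono mult_mono) (auto simp: mult_ac)
    also have "\<dots> = (c0 * Suc n * (27 * M) ^ Suc n / fact n) * (t * \<bar>y\<bar>) ^ n" by (simp add: field_simps)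
    finally show "norm (Q n x (t * y) ** B x (t * y) + P n x (t * y) ** Bx x (t * y)) \<le> (c0 * Suc n * (27 * M) ^ Suc n / fact n) * (t * \<bar>y\<bar>) ^ n" .
  qed
  also have "\<dots> = c0 * Suc n * (27 * M * \<bar>y\<bar>) ^ Suc n / fact (Suc n)"
    unfolding fs by (simp add: field_simps power_mult_distrib)
  finally show ?case using bP by simp
qed

end

context pfam
begin

lemma majorants:
  assumes M: "0 \<le> M" "\<And>x y. \<bar>x\<bar> \<le> R \<Longrightarrow> \<bar>y\<bar> \<le> R \<Longrightarrow> norm (B x y) \<le> M \<and> norm (Bx x y) \<le> M"
    and xy: "\<bar>x\<bar> \<le> R" "\<bar>y\<bar> \<le> R"
  shows "norm (P n x y) \<le> c0 * (27 * M * R) ^ n / fact n"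
    "norm (Q n x y) \<le> c0 * (2 * (27 * M * R)) ^ n / fact n"
proof -
  have c0: "c0 \<ge> 0" by (simp add: c0_def)
  have pw: "(27 * M * \<bar>y\<bar>) ^ n \<le> (27 * M * R) ^ n"
    using M(1) xy by (intro power_mono mult_left_mono) auto
  note b = PQ_bound[OF M xy(1) xy(2), of n]
  have "norm (P n x y) \<le> c0 * (27 * M * \<bar>y\<bar>) ^ n / fact n" using b by simp
  also have "\<dots> \<le> c0 * (27 * M * R) ^ n / fact n"
    using pw c0 by (intro divide_right_mono mult_left_mono) auto
  finally show "norm (P n x y) \<le> c0 * (27 * M * R) ^ n / fact n" .
  have n2: "real n \<le> 2 ^ n"
    using less_exp[of n] by (metis of_nat_less_iff of_nat_numeral of_nat_power less_imp_le)
  have "norm (Q n x y) \<le> c0 * n * (27 * M * \<bar>y\<bar>) ^ n / fact n" using b by simp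
  also have "\<dots> \<le> c0 * (2 ^ n * (27 * M * R) ^ n) / fact n"
    using pw c0 n2 M(1) by (intro divide_right_mono) (auto simp: mult.assoc intro!: mult_left_mono mult_mono)
  also have "\<dots> = c0 * (2 * (27 * M * R)) ^ n / fact n" by (simp only: power_mult_distrib)
  finally show "norm (Q n x y) \<le> c0 * (2 * (27 * M * R)) ^ n / fact n" .
qed

definition H :: "real \<Rightarrow> real \<Rightarrow> mat3" where "H x y = (\<Sum>n. P n x y)"
definition Hx :: "real \<Rightarrow> real \<Rightarrow> mat3" where "Hx x y = (\<Sum>n. Q n x y)"

lemma get_M:
  obtains M where "0 \<le> M" "\<And>x y. \<bar>x\<bar> \<le> R \<Longrightarrow> \<bar>y\<bar> \<le> R \<Longrightarrow> norm (B x y) \<le> M \<and> norm (Bx x y) \<le> M"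
  using local_bound[of R] by blast

lemma summable_P: "summable (\<lambda>n. P n x y)" and summable_Q: "summable (\<lambda>n. Q n x y)"
proof -
  define R where "R = max \<bar>x\<bar> \<bar>y\<bar>"
  obtain M where M: "0 \<le> M" "\<And>x y. \<bar>x\<bar> \<le> R \<Longrightarrow> \<bar>y\<bar> \<le> R \<Longrightarrow> norm (B x y) \<le> M \<and> norm (Bx x y) \<le> M"
    using local_bound[of R] by blast
  have xy: "\<bar>x\<bar> \<le> R" "\<bar>y\<bar> \<le> R" by (auto simp: R_def)
  show "summable (\<lambda>n. P n x y)"
    by (rule summable_comparison_test[OF _ summable_expbound[of c0 "27 * M * R"]])
       (use majorants(1)[OF M xy] in auto)
  show "summable (\<lambda>n. Q n x y)"
    by (rule summable_comparison_test[OF _ summable_expbound[of c0 "2 * (27 * M * R)"]])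
       (use majorants(2)[OF M xy] in auto)
qed

lemma P0_zero: "P (Suc n) x 0 = 0" by simp
lemma Q_zero: "Q n x 0 = 0" by (cases n) auto

lemma H_init: "H x 0 = mat 1"
proof -
  have "(\<lambda>n. P n x 0) = (\<lambda>n. if n = 0 then mat 1 else 0)"
    by (rule ext) (case_tac n, auto)
  then have "(\<lambda>n. P n x 0) sums mat 1" using sums_single[of 0 "\<lambda>n. mat 1"] by simp
  then show ?thesis by (simp add: H_def sums_iff)
qed

lemma Hx_init: "Hx x 0 = 0"
  by (simp add: Hx_def Q_zero)

lemma H_split: "H x y = mat 1 + (\<Sum>n. P (Suc n) x y)"
  using suminf_split_head[OF summable_P[of x y]] by (simp add: H_def)

lemma Hx_split: "Hx x y = (\<Sum>n. Q (Suc n) x y)"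
  using suminf_split_head[OF summable_Q[of x y]] by (simp add: Hx_def)

lemma bl_right: "bounded_linear (\<lambda>a::mat3. a ** (C::mat3))"
  by (rule bounded_bilinear.bounded_linear_left[OF bounded_bilinear_mmult])

lemma H_dy: "((\<lambda>y. H x y) has_vector_derivative H x y0 ** B x y0) (at y0)"
proof -
  define R where "R = \<bar>x\<bar> + \<bar>y0\<bar> + 1"
  obtain M where M: "0 \<le> M" "\<And>x y. \<bar>x\<bar> \<le> R \<Longrightarrow> \<bar>y\<bar> \<le> R \<Longrightarrow> norm (B x y) \<le> M \<and> norm (Bx x y) \<le> M"
    using local_bound[of R] by blast
  have "((\<lambda>y. \<Sum>n. P (Suc n) x y) has_vector_derivative (\<Sum>n. P n x y0 ** B x y0)) (at y0)"
  proof (rule series_vderiv[where a="-R" and b=R and M="\<lambda>n. 27 * (c0 * (27 * M * R) ^ n / fact n) * M"])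
    show "((\<lambda>y. P (Suc n) x y) has_vector_derivative P n x y ** B x y) (at y)" for n y by (rule derPy)
    show "norm (P n x y ** B x y) \<le> 27 * (c0 * (27 * M * R) ^ n / fact n) * M" if "y \<in> {-R<..<R}" for n y
    proof -
      have xy: "\<bar>x\<bar> \<le> R" "\<bar>y\<bar> \<le> R" using that by (auto simp: R_def)
      have "norm (P n x y ** B x y) \<le> 27 * norm (P n x y) * norm (B x y)" by (rule norm_mmult_le)
      also have "\<dots> \<le> 27 * (c0 * (27 * M * R) ^ n / fact n) * M"
        using majorants(1)[OF M xy, of n] M(2)[OF xy] M(1) xy by (intro mult_mono) (auto simp: c0_def)
      finally show ?thesis .
    qed
    show "summable (\<lambda>n. 27 * (c0 * (27 * M * R) ^ n / fact n) * M)"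
      using summable_mult[OF summable_mult2[OF summable_expbound[of c0 "27 * M * R"], of M], of 27]
      by (simp add: mult_ac)
    show "summable (\<lambda>n. P (Suc n) x y)" for y by (rule iffD2[OF summable_Suc_iff summable_P])
    show "y0 \<in> {-R<..<R}" by (auto simp: R_def)
  qed
  moreover have "(\<Sum>n. P n x y0 ** B x y0) = H x y0 ** B x y0"
    unfolding H_def by (rule bounded_linear.suminf[OF bl_right summable_P, symmetric])
  ultimately have d: "((\<lambda>y. mat 1 + (\<Sum>n. P (Suc n) x y)) has_vector_derivative H x y0 ** B x y0) (at y0)"
    by (auto intro!: derivative_eq_intros)
  have e: "H x = (\<lambda>y. mat 1 + (\<Sum>n. P (Suc n) x y))" using H_split by blast
  show ?thesis using d by (simp only: e[symmetric])
qed

lemma H_dx: "((\<lambda>x. H x y) has_vector_derivative Hx x0 y) (at x0)"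
proof -
  define R where "R = \<bar>x0\<bar> + \<bar>y\<bar> + 1"
  obtain M where M: "0 \<le> M" "\<And>x y. \<bar>x\<bar> \<le> R \<Longrightarrow> \<bar>y\<bar> \<le> R \<Longrightarrow> norm (B x y) \<le> M \<and> norm (Bx x y) \<le> M"
    using local_bound[of R] by blast
  have "((\<lambda>x. \<Sum>n. P n x y) has_vector_derivative (\<Sum>n. Q n x0 y)) (at x0)"
  proof (rule series_vderiv[where a="-R" and b=R and M="\<lambda>n. c0 * (2 * (27 * M * R)) ^ n / fact n"])
    show "((\<lambda>x. P n x y) has_vector_derivative Q n x y) (at x)" for n x by (rule derPx)
    show "norm (Q n x y) \<le> c0 * (2 * (27 * M * R)) ^ n / fact n" if "x \<in> {-R<..<R}" for n x
      using that by (intro majorants(2)[OF M]) (auto simp: R_def)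
    show "summable (\<lambda>n. c0 * (2 * (27 * M * R)) ^ n / fact n)" by (rule summable_expbound)
    show "summable (\<lambda>n. P n x y)" for x by (rule summable_P)
    show "x0 \<in> {-R<..<R}" by (auto simp: R_def)
  qed
  then show ?thesis by (simp add: H_def Hx_def)
qed

lemma bl_left: "bounded_linear (\<lambda>a::mat3. a ** (C::mat3))"
  by (rule bounded_bilinear.bounded_linear_left[OF bounded_bilinear_mmult])

lemma Hx_dy: "((\<lambda>y. Hx x y) has_vector_derivative Hx x y0 ** B x y0 + H x y0 ** Bx x y0) (at y0)"
proof -
  define R where "R = \<bar>x\<bar> + \<bar>y0\<bar> + 1"
  obtain M where M: "0 \<le> M" "\<And>x y. \<bar>x\<bar> \<le> R \<Longrightarrow> \<bar>y\<bar> \<le> R \<Longrightarrow> norm (B x y) \<le> M \<and> norm (Bx x y) \<le> M"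
    using local_bound[of R] by blast
  define m where "m n = 27 * (c0 * (2 * (27 * M * R)) ^ n / fact n) * M + 27 * (c0 * (27 * M * R) ^ n / fact n) * M" for n
  have c0: "0 \<le> c0" by (simp add: c0_def)
  have "((\<lambda>y. \<Sum>n. Q (Suc n) x y) has_vector_derivative (\<Sum>n. Q n x y0 ** B x y0 + P n x y0 ** Bx x y0)) (at y0)"
  proof (rule series_vderiv[where a="-R" and b=R and M=m])
    show "((\<lambda>y. Q (Suc n) x y) has_vector_derivative Q n x y ** B x y + P n x y ** Bx x y) (at y)" for n y by (rule derQy)
    show "norm (Q n x y ** B x y + P n x y ** Bx x y) \<le> m n" if "y \<in> {-R<..<R}" for n y
    proof -
      have xy: "\<bar>x\<bar> \<le> R" "\<bar>y\<bar> \<le> R" using that by (auto simp: R_def)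
      have "norm (Q n x y ** B x y + P n x y ** Bx x y) \<le> 27 * norm (Q n x y) * norm (B x y) + 27 * norm (P n x y) * norm (Bx x y)"
        by (rule order_trans[OF norm_triangle_ineq add_mono[OF norm_mmult_le norm_mmult_le]])
      also have "\<dots> \<le> m n" unfolding m_def
        using majorants[OF M xy, of n] M(2)[OF xy] M(1) c0 xy
        by (intro add_mono mult_mono) auto
      finally show ?thesis .
    qed
    show "summable m" unfolding m_def
      by (intro summable_add summable_mult2 summable_mult summable_expbound)
    show "summable (\<lambda>n. Q (Suc n) x y)" for y by (rule iffD2[OF summable_Suc_iff summable_Q])
    show "y0 \<in> {-R<..<R}" by (auto simp: R_def)
  qed
  moreover have "(\<Sum>n. Q n x y0 ** B x y0 + P n x y0 ** Bx x y0) = Hx x y0 ** B x y0 + H x y0 ** Bx x y0"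
  proof -
    have s1: "summable (\<lambda>n. Q n x y0 ** B x y0)" by (rule bounded_linear.summable[OF bl_left summable_Q])
    have s2: "summable (\<lambda>n. P n x y0 ** Bx x y0)" by (rule bounded_linear.summable[OF bl_left summable_P])
    show ?thesis unfolding H_def Hx_def suminf_add[OF s1 s2, symmetric]
      by (simp add: bounded_linear.suminf[OF bl_left summable_Q] bounded_linear.suminf[OF bl_left summable_P])
  qed
  ultimately have d: "((\<lambda>y. \<Sum>n. Q (Suc n) x y) has_vector_derivative Hx x y0 ** B x y0 + H x y0 ** Bx x y0) (at y0)"
    by simp
  have e: "Hx x = (\<lambda>y. \<Sum>n. Q (Suc n) x y)" using Hx_split by blast
  show ?thesis using d by (simp only: e[symmetric])
qed

lemma cont_series:
  fixes f :: "nat \<Rightarrow> real \<Rightarrow> real \<Rightarrow> mat3"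
  assumes c: "\<And>n. continuous_on UNIV (\<lambda>(x, y). f n x y)"
    and b: "\<And>R. \<exists>m. summable m \<and> (\<forall>n x y. \<bar>x\<bar> \<le> R \<longrightarrow> \<bar>y\<bar> \<le> R \<longrightarrow> norm (f n x y) \<le> m n)"
  shows "continuous_on UNIV (\<lambda>(x, y). \<Sum>n. f n x y)"
proof -
  have "isCont (\<lambda>p. \<Sum>n. f n (fst p) (snd p)) p" for p
  proof -
    define R where "R = \<bar>fst p\<bar> + \<bar>snd p\<bar> + 1"
    define S where "S = {-R<..<R} \<times> {-R<..<R}"
    obtain m where m: "summable m" "\<And>n x y. \<bar>x\<bar> \<le> R \<Longrightarrow> \<bar>y\<bar> \<le> R \<Longrightarrow> norm (f n x y) \<le> m n"
      using b[of R] by blast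
    have ul: "uniform_limit S (\<lambda>n q. \<Sum>i<n. f i (fst q) (snd q)) (\<lambda>q. \<Sum>i. f i (fst q) (snd q)) sequentially"
      by (rule Weierstrass_m_test[OF _ m(1)]) (auto simp: S_def intro!: m(2))
    have "continuous_on S (\<lambda>q. \<Sum>i. f i (fst q) (snd q))"
    proof (rule uniform_limit_theorem[OF _ ul])
      show "\<forall>\<^sub>F n in sequentially. continuous_on S (\<lambda>q. \<Sum>i<n. f i (fst q) (snd q))"
      proof (intro always_eventually allI continuous_on_sum)
        fix n i show "continuous_on S (\<lambda>q. f i (fst q) (snd q))"
          using continuous_on_subset[OF c[of i]] by (simp add: case_prod_unfold)
      qed
    qed simp
    moreover have "open S" by (auto simp: S_def intro!: open_Times)
    moreover have "p \<in> S" by (cases p) (auto simp: S_def R_def)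
    ultimately show ?thesis by (simp add: continuous_on_eq_continuous_at)
  qed
  then have "continuous_on UNIV (\<lambda>p. \<Sum>n. f n (fst p) (snd p))"
    by (simp add: continuous_at_imp_continuous_on)
  then show ?thesis by (simp add: case_prod_unfold)
qed

lemma contH: "continuous_on UNIV (\<lambda>(x, y). H x y)"
  unfolding H_def
proof (rule cont_series[OF contP])
  fix R :: real
  obtain M where M: "0 \<le> M" "\<And>x y. \<bar>x\<bar> \<le> \<bar>R\<bar> \<Longrightarrow> \<bar>y\<bar> \<le> \<bar>R\<bar> \<Longrightarrow> norm (B x y) \<le> M \<and> norm (Bx x y) \<le> M"
    using local_bound[of "\<bar>R\<bar>"] by blast
  show "\<exists>m. summable m \<and> (\<forall>n x y. \<bar>x\<bar> \<le> R \<longrightarrow> \<bar>y\<bar> \<le> R \<longrightarrow> norm (P n x y) \<le> m n)"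
    by (intro exI[of _ "\<lambda>n. c0 * (27 * M * \<bar>R\<bar>) ^ n / fact n"] conjI summable_expbound allI impI majorants(1)[OF M]) auto
qed

lemma contHx: "continuous_on UNIV (\<lambda>(x, y). Hx x y)"
  unfolding Hx_def
proof (rule cont_series[OF contQ])
  fix R :: real
  obtain M where M: "0 \<le> M" "\<And>x y. \<bar>x\<bar> \<le> \<bar>R\<bar> \<Longrightarrow> \<bar>y\<bar> \<le> \<bar>R\<bar> \<Longrightarrow> norm (B x y) \<le> M \<and> norm (Bx x y) \<le> M"
    using local_bound[of "\<bar>R\<bar>"] by blast
  show "\<exists>m. summable m \<and> (\<forall>n x y. \<bar>x\<bar> \<le> R \<longrightarrow> \<bar>y\<bar> \<le> R \<longrightarrow> norm (Q n x y) \<le> m n)"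
    by (intro exI[of _ "\<lambda>n. c0 * (2 * (27 * M * \<bar>R\<bar>)) ^ n / fact n"] conjI summable_expbound allI impI majorants(2)[OF M]) auto
qed

end

lemma isCont_det3: assumes "isCont f a" shows "isCont (\<lambda>x. det (f x :: mat3)) a"
proof -
  have e: "isCont (\<lambda>x. f x $ i $ j) a" for i j by (intro isCont_vec_nth assms)
  show ?thesis unfolding det_3 by (intro isCont_diff isCont_add isCont_mult e)
qed

lemma bl_transpose: "bounded_linear (transpose :: mat3 \<Rightarrow> mat3)"
proof (rule bounded_linear_intro[where K=9])
  fix a b :: mat3 and r :: real
  show "transpose (a + b) = transpose a + transpose b" by (simp add: transpose_def vec_eq_iff)
  show "transpose (r *\<^sub>R a) = r *\<^sub>R transpose a" by (simp add: transpose_def vec_eq_iff)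
  have r: "norm (transpose a $ i) \<le> 3 * norm a" for i
  proof -
    have "norm (transpose a $ i) \<le> (\<Sum>j\<in>(UNIV::3 set). \<bar>transpose a $ i $ j\<bar>)" by (rule norm_le_l1_cart)
    also have "\<dots> \<le> (\<Sum>j\<in>(UNIV::3 set). norm a)"
      by (intro sum_mono) (simp add: transpose_def norm_mat_entry)
    finally show ?thesis by simp
  qed
  have "norm (transpose a) \<le> (\<Sum>i\<in>(UNIV::3 set). norm (transpose a $ i))" by (simp add: norm_vec_def L2_set_le_sum)
  also have "\<dots> \<le> (\<Sum>i\<in>(UNIV::3 set). 3 * norm a)" by (intro sum_mono r)
  finally show "norm (transpose a) \<le> norm a * 9" by simp
qed

lemma mmult_diff_left: "((A::mat3) - B) ** C = A ** C - B ** C"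
  by (simp add: matrix_matrix_mult_def vec_eq_iff sum_subtractf[symmetric] left_diff_distrib)
lemma mmult_diff_right: "(A::mat3) ** (B - C) = A ** B - A ** C"
  by (simp add: matrix_matrix_mult_def vec_eq_iff sum_subtractf[symmetric] right_diff_distrib)
lemma mmult_neg_right: "(A::mat3) ** (- B) = - (A ** B)"
  by (simp add: matrix_matrix_mult_def vec_eq_iff sum_negf[symmetric])
lemma mmult_neg_left: "(- A::mat3) ** B = - (A ** B)"
  by (simp add: matrix_matrix_mult_def vec_eq_iff sum_negf[symmetric])

lemmas mm_simps = mmult_rdistrib matrix_add_ldistrib mmult_diff_left mmult_diff_right
  mmult_neg_left mmult_neg_right matrix_mul_assoc

lemma transpose_diff: "transpose ((A::mat3) - B) = transpose A - transpose B"
  by (simp add: transpose_def vec_eq_iff)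
lemma transpose_add: "transpose ((A::mat3) + B) = transpose A + transpose B"
  by (simp add: transpose_def vec_eq_iff)

lemma zero_of_mmult_transpose: "(D::mat3) ** transpose D = 0 \<Longrightarrow> D = 0"
proof -
  assume h: "D ** transpose D = 0"
  have "\<forall>i. (\<Sum>k\<in>UNIV. D$i$k * D$i$k) = 0"
    using h by (simp add: matrix_matrix_mult_def transpose_def vec_eq_iff)
  then have "\<forall>i. \<forall>k\<in>UNIV. D$i$k * D$i$k = 0"
    by (subst (asm) sum_nonneg_eq_0_iff) auto
  then show "D = 0" by (simp add: vec_eq_iff)
qed

lemma deriv_zero_const:
  fixes E :: "real \<Rightarrow> 'a::real_normed_vector"
  assumes "\<And>y. (E has_vector_derivative 0) (at y)"
  shows "E y = E 0"
proof -
  have "\<exists>c. \<forall>x\<in>UNIV. E x = c"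
    by (rule has_derivative_zero_constant) (use assms in \<open>auto simp: has_vector_derivative_def intro: has_derivative_at_withinI\<close>)
  then show ?thesis by auto
qed

lemma uniq_skew:
  fixes D C :: "real \<Rightarrow> mat3"
  assumes d: "\<And>y. (D has_vector_derivative D y ** C y) (at y)"
    and sk: "\<And>y. transpose (C y) = - C y" and D0: "D 0 = 0"
  shows "D y = 0"
proof -
  have "((\<lambda>y. D y ** transpose (D y)) has_vector_derivative 0) (at y)" for y
  proof -
    have t: "((\<lambda>y. transpose (D y)) has_vector_derivative transpose (D y ** C y)) (at y)"
      by (rule bounded_linear.has_vector_derivative[OF bl_transpose d])
    have "((\<lambda>y. D y ** transpose (D y)) has_vector_derivative D y ** transpose (D y ** C y) + (D y ** C y) ** transpose (D y)) (at y)"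
      by (rule mm_deriv[OF d t])
    moreover have "D y ** transpose (D y ** C y) + (D y ** C y) ** transpose (D y) = 0"
    proof -
      have "D y ** transpose (D y ** C y) = D y ** ((- C y) ** transpose (D y))"
        by (simp only: matrix_transpose_mul sk)
      also have "\<dots> = - ((D y ** C y) ** transpose (D y))"
        by (simp only: mmult_neg_left mmult_neg_right matrix_mul_assoc)
      finally show ?thesis by simp
    qed
    ultimately show ?thesis by (simp only:)
  qed
  then have "D y ** transpose (D y) = D 0 ** transpose (D 0)"
    by (rule deriv_zero_const[where E="\<lambda>y. D y ** transpose (D y)"])
  then show ?thesis using D0 by (rule_tac zero_of_mmult_transpose) simp
qed


lemma deriv_KKt:
  fixes K C :: "real \<Rightarrow> mat3"
  assumes d: "(K has_vector_derivative K y ** C y) (at y)"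
    and sk: "transpose (C y) = - C y"
  shows "((\<lambda>y. K y ** transpose (K y)) has_vector_derivative 0) (at y)"
proof -
  have t: "((\<lambda>y. transpose (K y)) has_vector_derivative transpose (K y ** C y)) (at y)"
    by (rule bounded_linear.has_vector_derivative[OF bl_transpose d])
  have "((\<lambda>y. K y ** transpose (K y)) has_vector_derivative K y ** transpose (K y ** C y) + (K y ** C y) ** transpose (K y)) (at y)"
    by (rule mm_deriv[OF d t])
  moreover have "K y ** transpose (K y ** C y) + (K y ** C y) ** transpose (K y) = 0"
  proof -
    have "K y ** transpose (K y ** C y) = K y ** ((- C y) ** transpose (K y))"
      by (simp only: matrix_transpose_mul sk)
    also have "\<dots> = - ((K y ** C y) ** transpose (K y))"
      by (simp only: mmult_neg_left mmult_neg_right matrix_mul_assoc)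
    finally show ?thesis by simp
  qed
  ultimately show ?thesis by (simp only:)
qed

lemma orth_ode:
  fixes K C :: "real \<Rightarrow> mat3"
  assumes d: "\<And>y. (K has_vector_derivative K y ** C y) (at y)"
    and sk: "\<And>y. transpose (C y) = - C y" and K0: "K 0 = mat 1"
  shows "K y ** transpose (K y) = mat 1"
proof -
  have "\<And>y. ((\<lambda>y. K y ** transpose (K y)) has_vector_derivative 0) (at y)"
    by (rule deriv_KKt[OF d sk])
  from deriv_zero_const[where E="\<lambda>y. K y ** transpose (K y)", OF this] K0 show ?thesis by simp
qed

lemma det_ode:
  fixes K C :: "real \<Rightarrow> mat3"
  assumes d: "\<And>y. (K has_vector_derivative K y ** C y) (at y)"
    and sk: "\<And>y. transpose (C y) = - C y" and K0: "K 0 = mat 1"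
  shows "det (K y) = 1"
proof -
  define f where "f y = det (K y)" for y
  have sq: "f y * f y = 1" for y
  proof -
    have "det (K y ** transpose (K y)) = 1" using orth_ode[OF d sk K0, of y] by simp
    then show ?thesis by (simp add: det_mul f_def)
  qed
  have c: "isCont f y" for y unfolding f_def
    by (rule isCont_det3) (rule has_vector_derivative_continuous[OF d])
  have f0: "f 0 = 1" by (simp add: f_def K0)
  show ?thesis
  proof (rule ccontr)
    assume "det (K y) \<noteq> 1"
    then have fy: "f y = -1" using sq[of y] unfolding f_def
      by (metis add.inverse_inverse minus_mult_minus mult_cancel_left1 square_eq_1_iff)
    have "\<exists>x. f x = 0"
    proof (cases "0 \<le> y")
      case True
      then show ?thesis using IVT2[of f y 0 0] fy f0 c by auto
    next
      case False
      then show ?thesis using IVT[of f y 0 0] fy f0 c by auto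
    qed
    then show False using sq by (metis mult_zero_left zero_neq_one)
  qed
qed

locale frob =
  fixes A B Ay Bx :: "real \<Rightarrow> real \<Rightarrow> mat3"
  assumes contA: "continuous_on UNIV (\<lambda>(x, y). A x y)"
    and contB: "continuous_on UNIV (\<lambda>(x, y). B x y)"
    and contAy: "continuous_on UNIV (\<lambda>(x, y). Ay x y)"
    and contBx: "continuous_on UNIV (\<lambda>(x, y). Bx x y)"
    and derA: "\<And>x y. ((\<lambda>y. A x y) has_vector_derivative Ay x y) (at y)"
    and derB: "\<And>x y. ((\<lambda>x. B x y) has_vector_derivative Bx x y) (at x)"
    and compat: "\<And>x y. Ay x y - Bx x y = A x y ** B x y - B x y ** A x y"
    and skA: "\<And>x y. transpose (A x y) = - A x y"
    and skB: "\<And>x y. transpose (B x y) = - B x y"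
begin

sublocale pB: pfam B Bx by unfold_locales (rule contB contBx derB)+

sublocale pA: pfam "\<lambda>p s. A s 0" "\<lambda>p s. 0"
proof unfold_locales
  have "continuous_on UNIV ((\<lambda>(x, y). A x y) \<circ> (\<lambda>(p::real, s::real). (s, 0::real)))"
    by (intro continuous_on_compose continuous_on_subset[OF contA]) (auto simp: case_prod_unfold intro!: continuous_intros)
  then show "continuous_on UNIV (\<lambda>(p::real, s). A s 0)" by (simp add: o_def case_prod_unfold)
qed (auto intro: continuous_intros)

definition G :: "real \<Rightarrow> mat3" where "G x = pA.H 0 x"

lemma G_d: "(G has_vector_derivative G x ** A x 0) (at x)"
  using pA.H_dy[of 0 x] by (simp add: G_def[abs_def])

lemma G0: "G 0 = mat 1" by (simp add: G_def pA.H_init)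

lemma G_orth: "G x ** transpose (G x) = mat 1"
  by (rule orth_ode[OF G_d skA G0])

lemma G_det: "det (G x) = 1"
  by (rule det_ode[OF G_d skA G0])

lemma H_orth: "pB.H x y ** transpose (pB.H x y) = mat 1"
  by (rule orth_ode[where K="pB.H x" and C="B x", OF pB.H_dy skB pB.H_init])

lemma H_det: "det (pB.H x y) = 1"
  by (rule det_ode[where K="pB.H x" and C="B x", OF pB.H_dy skB pB.H_init])

lemma D_zero: "A x 0 ** pB.H x y + pB.Hx x y - pB.H x y ** A x y = 0"
proof (rule uniq_skew[where D="\<lambda>y. A x 0 ** pB.H x y + pB.Hx x y - pB.H x y ** A x y" and C="B x"])
  fix y
  let ?H = "pB.H x y" and ?Hx = "pB.Hx x y" and ?Z = "A x 0" and ?A = "A x y" and ?B = "B x y"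
  have d1: "((\<lambda>y. ?Z ** pB.H x y) has_vector_derivative ?Z ** (?H ** ?B) + 0 ** ?H) (at y)"
    by (rule mm_deriv[OF has_vector_derivative_const pB.H_dy])
  have d2: "((\<lambda>y. pB.H x y ** A x y) has_vector_derivative ?H ** Ay x y + (?H ** ?B) ** ?A) (at y)"
    by (rule mm_deriv[OF pB.H_dy derA])
  have d: "((\<lambda>y. A x 0 ** pB.H x y + pB.Hx x y - pB.H x y ** A x y) has_vector_derivative
      (?Z ** (?H ** ?B) + 0 ** ?H) + (?Hx ** ?B + ?H ** Bx x y) - (?H ** Ay x y + (?H ** ?B) ** ?A)) (at y)"
    by (intro has_vector_derivative_diff has_vector_derivative_add d1 d2 pB.Hx_dy)
  have c: "?H ** Ay x y = ?H ** Bx x y + (?H ** ?A) ** ?B - (?H ** ?B) ** ?A"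
  proof -
    have "Ay x y = Bx x y + (?A ** ?B - ?B ** ?A)" using compat[of x y] by (simp add: algebra_simps)
    then show ?thesis by (simp add: mm_simps)
  qed
  have "(?Z ** (?H ** ?B) + 0 ** ?H) + (?Hx ** ?B + ?H ** Bx x y) - (?H ** Ay x y + (?H ** ?B) ** ?A)
      = (?Z ** ?H + ?Hx - ?H ** ?A) ** ?B"
    unfolding c by (simp add: mm_simps algebra_simps)
  with d show "((\<lambda>y. A x 0 ** pB.H x y + pB.Hx x y - pB.H x y ** A x y) has_vector_derivative
      (A x 0 ** pB.H x y + pB.Hx x y - pB.H x y ** A x y) ** B x y) (at y)" by simp
next
  show "transpose (B x y) = - B x y" for y by (rule skB)
  show "A x 0 ** pB.H x 0 + pB.Hx x 0 - pB.H x 0 ** A x 0 = 0"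
    by (simp add: pB.H_init pB.Hx_init)
qed

definition F :: "real \<Rightarrow> real \<Rightarrow> mat3" where "F x y = G x ** pB.H x y"

lemma F_dy: "((\<lambda>y. F x y) has_vector_derivative F x y ** B x y) (at y)"
proof -
  have "((\<lambda>y. G x ** pB.H x y) has_vector_derivative G x ** (pB.H x y ** B x y) + 0 ** pB.H x y) (at y)"
    by (rule mm_deriv[OF has_vector_derivative_const pB.H_dy])
  then show ?thesis by (simp add: F_def matrix_mul_assoc)
qed

lemma F_dx: "((\<lambda>x. F x y) has_vector_derivative F x y ** A x y) (at x)"
proof -
  have "((\<lambda>x. G x ** pB.H x y) has_vector_derivative G x ** pB.Hx x y + (G x ** A x 0) ** pB.H x y) (at x)"
    by (rule mm_deriv[OF G_d pB.H_dx])
  moreover have "G x ** pB.Hx x y + (G x ** A x 0) ** pB.H x y = F x y ** A x y"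
  proof -
    have "pB.Hx x y = pB.H x y ** A x y - A x 0 ** pB.H x y"
      using D_zero[of x y] by (simp add: algebra_simps)
    then show ?thesis by (simp add: F_def mm_simps)
  qed
  ultimately show ?thesis by (simp add: F_def)
qed

lemma contG: "continuous_on UNIV G"
  by (intro continuous_at_imp_continuous_on ballI has_vector_derivative_continuous[OF G_d])

lemma contF: "continuous_on UNIV (\<lambda>(x, y). F x y)"
proof -
  have "continuous_on UNIV (\<lambda>(x, y). G x)"
    by (simp add: case_prod_unfold) (intro continuous_on_compose2[OF contG] continuous_intros, auto)
  then show ?thesis unfolding F_def by (rule cont2_mm[OF _ pB.contH])
qed

lemma F_orth: "F x y ** transpose (F x y) = mat 1"
proof -
  have "F x y ** transpose (F x y) = G x ** (pB.H x y ** transpose (pB.H x y)) ** transpose (G x)"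
    by (simp add: F_def matrix_transpose_mul matrix_mul_assoc)
  also have "\<dots> = mat 1" by (simp add: H_orth G_orth)
  finally show ?thesis .
qed

lemma F_det: "det (F x y) = 1"
  by (simp add: F_def det_mul G_det H_det)

end


lemma partial_x:
  fixes u :: "complex \<Rightarrow> 'a::real_normed_vector"
  assumes "u differentiable at (Complex x y)"
  shows "((\<lambda>s. u (Complex s y)) has_vector_derivative dx u (Complex x y)) (at x)"
proof -
  let ?D = "frechet_derivative u (at (Complex x y))"
  have du: "(u has_derivative ?D) (at (Complex x y))" using assms by (rule frechet_derivative_works[THEN iffD1])
  have lin: "linear ?D" using has_derivative_linear[OF du] .
  have dg: "((\<lambda>s. Complex s y) has_derivative (\<lambda>h. h *\<^sub>R 1)) (at x)"
  proof -
    have "((\<lambda>s. of_real s + \<i> * of_real y) has_derivative (\<lambda>h. of_real h)) (at x)"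
      by (auto intro!: derivative_eq_intros)
    moreover have "(\<lambda>s. of_real s + \<i> * of_real y) = (\<lambda>s. Complex s y)" by (auto simp: complex_eq_iff)
    ultimately show ?thesis by (simp add: scaleR_conv_of_real)
  qed
  have "((\<lambda>s. u (Complex s y)) has_derivative (\<lambda>h. ?D (h *\<^sub>R 1))) (at x)"
    using has_derivative_compose[OF dg du] by simp
  then show ?thesis
    by (simp add: has_vector_derivative_def dx_def linear_scale[OF lin])
qed

lemma partial_y:
  fixes u :: "complex \<Rightarrow> 'a::real_normed_vector"
  assumes "u differentiable at (Complex x y)"
  shows "((\<lambda>s. u (Complex x s)) has_vector_derivative dy u (Complex x y)) (at y)"
proof -
  let ?D = "frechet_derivative u (at (Complex x y))"
  have du: "(u has_derivative ?D) (at (Complex x y))" using assms by (rule frechet_derivative_works[THEN iffD1])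
  have lin: "linear ?D" using has_derivative_linear[OF du] .
  have dg: "((\<lambda>s. Complex x s) has_derivative (\<lambda>h. h *\<^sub>R \<i>)) (at y)"
  proof -
    have "((\<lambda>s. of_real x + \<i> * of_real s) has_derivative (\<lambda>h. \<i> * of_real h)) (at y)"
      by (auto intro!: derivative_eq_intros)
    moreover have "(\<lambda>s. of_real x + \<i> * of_real s) = (\<lambda>s. Complex x s)" by (auto simp: complex_eq_iff)
    ultimately show ?thesis by (simp add: scaleR_conv_of_real mult.commute)
  qed
  have "((\<lambda>s. u (Complex x s)) has_derivative (\<lambda>h. ?D (h *\<^sub>R \<i>))) (at y)"
    using has_derivative_compose[OF dg du] by simp
  then show ?thesis
    by (simp add: has_vector_derivative_def dy_def linear_scale[OF lin])
qed

lemma cont_from_complex: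
  assumes "continuous_on UNIV u"
  shows "continuous_on UNIV (\<lambda>(x, y). u (Complex x y))"
proof -
  have e: "(\<lambda>(x, y). u (Complex x y)) = u \<circ> (\<lambda>p. of_real (fst p) + \<i> * of_real (snd p))"
    by (auto simp: Complex_eq fun_eq_iff)
  show ?thesis unfolding e
    by (intro continuous_on_compose continuous_on_subset[OF assms]) (auto intro!: continuous_intros)
qed

lemma cont_to_complex:
  assumes "continuous_on UNIV (\<lambda>(x, y). g x y)"
  shows "continuous_on UNIV (\<lambda>z. g (Re z) (Im z))"
proof -
  have e: "(\<lambda>z. g (Re z) (Im z)) = (\<lambda>(x, y). g x y) \<circ> (\<lambda>z. (Re z, Im z))" by auto
  show ?thesis unfolding e
    by (intro continuous_on_compose continuous_on_subset[OF assms]) (auto intro!: continuous_intros)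
qed

lemma bridge:
  fixes g gx gy :: "real \<Rightarrow> real \<Rightarrow> 'a::real_normed_vector"
  assumes dgx: "\<And>x y. ((\<lambda>x. g x y) has_vector_derivative gx x y) (at x)"
    and dgy: "\<And>x y. ((\<lambda>y. g x y) has_vector_derivative gy x y) (at y)"
    and cgy: "continuous_on UNIV (\<lambda>(x, y). gy x y)"
  shows "((\<lambda>z. g (Re z) (Im z)) has_derivative (\<lambda>h. Re h *\<^sub>R gx (Re z) (Im z) + Im h *\<^sub>R gy (Re z) (Im z))) (at z)"
proof -
  let ?x = "Re z" and ?y = "Im z"
  have "((\<lambda>(x, y). g x y) has_derivative (\<lambda>(tx, ty). tx *\<^sub>R gx ?x ?y + blinfun_scaleR_left (gy ?x ?y) ty)) (at (?x, ?y) within UNIV \<times> UNIV)"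
  proof (rule has_derivative_partialsI)
    show "((\<lambda>x. g x ?y) has_derivative (\<lambda>tx. tx *\<^sub>R gx ?x ?y)) (at ?x within UNIV)"
      using dgx by (simp add: has_vector_derivative_def)
    show "((\<lambda>y. g x y) has_derivative blinfun_apply (blinfun_scaleR_left (gy x y))) (at y within UNIV)" for x y
      using dgy by (simp add: has_vector_derivative_def)
    show "continuous (at (?x, ?y) within UNIV \<times> UNIV) (\<lambda>(x, y). blinfun_scaleR_left (gy x y))"
    proof -
      have "continuous_on UNIV (blinfun_scaleR_left \<circ> (\<lambda>(x, y). gy x y))"
        by (intro continuous_on_compose cgy linear_continuous_on bounded_linear_blinfun_scaleR_left)
      then show ?thesis by (simp add: continuous_on_eq_continuous_within o_def case_prod_unfold)
    qed
  qed auto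
  then have d: "((\<lambda>(x, y). g x y) has_derivative (\<lambda>(tx, ty). tx *\<^sub>R gx ?x ?y + ty *\<^sub>R gy ?x ?y)) (at (?x, ?y))"
    by simp
  have dz: "((\<lambda>z. (Re z, Im z)) has_derivative (\<lambda>h. (Re h, Im h))) (at z)"
    by (auto intro!: derivative_eq_intros)
  have "((\<lambda>z. (\<lambda>(x, y). g x y) (Re z, Im z)) has_derivative (\<lambda>h. (\<lambda>(tx, ty). tx *\<^sub>R gx ?x ?y + ty *\<^sub>R gy ?x ?y) (Re h, Im h))) (at z)"
    by (rule has_derivative_compose[OF dz]) (use d in simp)
  then show ?thesis by simp
qed

lemma bridge_dx:
  fixes g gx gy :: "real \<Rightarrow> real \<Rightarrow> 'a::real_normed_vector"
  assumes dgx: "\<And>x y. ((\<lambda>x. g x y) has_vector_derivative gx x y) (at x)"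
    and dgy: "\<And>x y. ((\<lambda>y. g x y) has_vector_derivative gy x y) (at y)"
    and cgy: "continuous_on UNIV (\<lambda>(x, y). gy x y)"
  shows "(\<lambda>z. g (Re z) (Im z)) differentiable at z"
    "dx (\<lambda>z. g (Re z) (Im z)) = (\<lambda>z. gx (Re z) (Im z))"
    "dy (\<lambda>z. g (Re z) (Im z)) = (\<lambda>z. gy (Re z) (Im z))"
    "frechet_derivative (\<lambda>z. g (Re z) (Im z)) (at z) = (\<lambda>h. Re h *\<^sub>R gx (Re z) (Im z) + Im h *\<^sub>R gy (Re z) (Im z))"
proof -
  note b = bridge[OF dgx dgy cgy]
  have bz: "frechet_derivative (\<lambda>z. g (Re z) (Im z)) (at w) = (\<lambda>h. Re h *\<^sub>R gx (Re w) (Im w) + Im h *\<^sub>R gy (Re w) (Im w))" for w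
    using frechet_derivative_at[OF b[of w]] by simp
  show "(\<lambda>z. g (Re z) (Im z)) differentiable at z" using b by (auto simp: differentiable_def)
  show "frechet_derivative (\<lambda>z. g (Re z) (Im z)) (at z) = (\<lambda>h. Re h *\<^sub>R gx (Re z) (Im z) + Im h *\<^sub>R gy (Re z) (Im z))"
    using frechet_derivative_at[OF b] by simp
  show "dx (\<lambda>z. g (Re z) (Im z)) = (\<lambda>z. gx (Re z) (Im z))"
    by (simp add: dx_def fun_eq_iff bz)
  show "dy (\<lambda>z. g (Re z) (Im z)) = (\<lambda>z. gy (Re z) (Im z))"
    by (simp add: dy_def fun_eq_iff bz)
qed


lemma norm_mv_le: "norm ((A::mat3) *v (v::real^3)) \<le> 9 * norm A * norm v"
proof -
  have e: "\<bar>(A *v v)$i\<bar> \<le> 3 * (norm A * norm v)" for i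
  proof -
    have "\<bar>(A *v v)$i\<bar> = \<bar>\<Sum>k\<in>UNIV. A$i$k * v$k\<bar>" by (simp add: matrix_vector_mult_def)
    also have "\<dots> \<le> (\<Sum>k\<in>(UNIV::3 set). \<bar>A$i$k\<bar> * \<bar>v$k\<bar>)"
      by (metis (no_types, lifting) abs_mult sum.cong sum_abs)
    also have "\<dots> \<le> (\<Sum>k\<in>(UNIV::3 set). norm A * norm v)"
    proof (intro sum_mono mult_mono)
      fix k show "\<bar>A$i$k\<bar> \<le> norm A" by (rule norm_mat_entry) show "\<bar>v$k\<bar> \<le> norm v" by (rule component_le_norm_cart)
    qed auto
    finally show ?thesis by simp
  qed
  have "norm (A *v v) \<le> (\<Sum>i\<in>(UNIV::3 set). \<bar>(A *v v)$i\<bar>)" by (rule norm_le_l1_cart)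
  also have "\<dots> \<le> (\<Sum>i\<in>(UNIV::3 set). 3 * (norm A * norm v))" by (intro sum_mono e)
  finally show ?thesis by simp
qed

lemma bounded_bilinear_mv: "bounded_bilinear ((*v) :: mat3 \<Rightarrow> real^3 \<Rightarrow> real^3)"
  unfolding bounded_bilinear_def
proof (intro conjI allI)
  fix a a' :: mat3 and b b' :: "real^3" and r :: real
  show "(a + a') *v b = a *v b + a' *v b" by (simp add: matrix_vector_mult_def vec_eq_iff sum.distrib[symmetric] distrib_right)
  show "a *v (b + b') = a *v b + a *v b'" by (simp add: matrix_vector_right_distrib)
  show "(r *\<^sub>R a) *v b = r *\<^sub>R (a *v b)" by (simp add: matrix_vector_mult_def vec_eq_iff sum_distrib_left mult_ac)
  show "a *v (r *\<^sub>R b) = r *\<^sub>R (a *v b)" by (simp add: matrix_vector_mult_def vec_eq_iff sum_distrib_left mult_ac)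
next
  have "\<forall>(a::mat3) (b::real^3). norm (a *v b) \<le> norm a * norm b * 9"
    using norm_mv_le by (simp add: mult_ac)
  then show "\<exists>K. \<forall>(a::mat3) (b::real^3). norm (a *v b) \<le> norm a * norm b * K" by blast
qed

lemmas mv_deriv = bounded_bilinear.has_vector_derivative[OF bounded_bilinear_mv]
lemmas mv_cont = bounded_bilinear.continuous_on[OF bounded_bilinear_mv]

definition "K12 = (vector [vector [0, -1, 0], vector [1, 0, 0], vector [0, 0, 0]] :: mat3)"
definition "K13 = (vector [vector [0, 0, 1], vector [0, 0, 0], vector [-1, 0, 0]] :: mat3)"
definition "K23 = (vector [vector [0, 0, 0], vector [0, 0, 1], vector [0, -1, 0]] :: mat3)"
definition "e1 = (vector [1, 0, 0] :: real^3)"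
definition "e2 = (vector [0, 1, 0] :: real^3)"
definition "e3 = (vector [0, 0, 1] :: real^3)"

lemmas Kdefs = K12_def K13_def K23_def e1_def e2_def e3_def

lemma mat_entries_eq: "(M::mat3) = N \<longleftrightarrow> (\<forall>i j. M$i$j = N$i$j)"
  by (simp add: vec_eq_iff)

lemma test_compat:
  fixes a b c d e f :: real
  shows "(a *\<^sub>R K12 + b *\<^sub>R K13 + c *\<^sub>R K23) ** (d *\<^sub>R K12 + e *\<^sub>R K13 + f *\<^sub>R K23)
    - (d *\<^sub>R K12 + e *\<^sub>R K13 + f *\<^sub>R K23) ** (a *\<^sub>R K12 + b *\<^sub>R K13 + c *\<^sub>R K23)
   = (b * f - c * e) *\<^sub>R K12 + (c * d - a * f) *\<^sub>R K13 + (a * e - b * d) *\<^sub>R K23"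
  unfolding mat_entries_eq forall_3
  by (simp add: Kdefs matrix_matrix_mult_def sum_3 algebra_simps)


lemma Kskew: "transpose (a *\<^sub>R K12 + b *\<^sub>R K13 + c *\<^sub>R K23) = - (a *\<^sub>R K12 + b *\<^sub>R K13 + c *\<^sub>R K23)"
  unfolding mat_entries_eq forall_3 by (simp add: Kdefs transpose_def)

lemma Kmv: "(a *\<^sub>R K12 + b *\<^sub>R K13 + c *\<^sub>R K23) *v e3 = b *\<^sub>R e1 + c *\<^sub>R e2"
  by (simp add: vec_eq_iff forall_3 Kdefs matrix_vector_mult_def sum_3)

lemma Kmv2: "(a *\<^sub>R K12 + b *\<^sub>R K13 + c *\<^sub>R K23) *v (d *\<^sub>R e1 + e *\<^sub>R e2)
   = (- a * e) *\<^sub>R e1 + (a * d) *\<^sub>R e2 + (- b * d - c * e) *\<^sub>R e3"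
  by (simp add: vec_eq_iff forall_3 Kdefs matrix_vector_mult_def sum_3 algebra_simps)

locale sgframe =
  fixes u ux uy uxx uxy uyx uyy :: "real \<Rightarrow> real \<Rightarrow> real" and \<kappa> \<sigma> :: real
  assumes cu: "continuous_on UNIV (\<lambda>p. u (fst p) (snd p))"
    and cux: "continuous_on UNIV (\<lambda>p. ux (fst p) (snd p))"
    and cuy: "continuous_on UNIV (\<lambda>p. uy (fst p) (snd p))"
    and cuxx: "continuous_on UNIV (\<lambda>p. uxx (fst p) (snd p))"
    and cuxy: "continuous_on UNIV (\<lambda>p. uxy (fst p) (snd p))"
    and cuyx: "continuous_on UNIV (\<lambda>p. uyx (fst p) (snd p))"
    and cuyy: "continuous_on UNIV (\<lambda>p. uyy (fst p) (snd p))"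
    and du_x: "\<And>x y. ((\<lambda>x. u x y) has_real_derivative ux x y) (at x)"
    and du_y: "\<And>x y. ((\<lambda>y. u x y) has_real_derivative uy x y) (at y)"
    and dux_x: "\<And>x y. ((\<lambda>x. ux x y) has_real_derivative uxx x y) (at x)"
    and dux_y: "\<And>x y. ((\<lambda>y. ux x y) has_real_derivative uxy x y) (at y)"
    and duy_x: "\<And>x y. ((\<lambda>x. uy x y) has_real_derivative uyx x y) (at x)"
    and duy_y: "\<And>x y. ((\<lambda>y. uy x y) has_real_derivative uyy x y) (at y)"
    and sg: "\<And>x y. uxx x y + uyy x y = - 2 * sinh (2 * u x y)"
    and ks: "\<kappa>\<^sup>2 + \<sigma>\<^sup>2 = 1"
begin

definition "p1 x y = 2 * \<kappa> * cosh (u x y)"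
definition "p2 x y = 2 * \<sigma> * sinh (u x y)"
definition "q1 x y = - 2 * \<sigma> * cosh (u x y)"
definition "q2 x y = 2 * \<kappa> * sinh (u x y)"

definition "AA x y = (- uy x y) *\<^sub>R K12 + p1 x y *\<^sub>R K13 + p2 x y *\<^sub>R K23"
definition "BB x y = ux x y *\<^sub>R K12 + q1 x y *\<^sub>R K13 + q2 x y *\<^sub>R K23"
definition "AAy x y = (- uyy x y) *\<^sub>R K12 + (2 * \<kappa> * sinh (u x y) * uy x y) *\<^sub>R K13
   + (2 * \<sigma> * cosh (u x y) * uy x y) *\<^sub>R K23"
definition "BBx x y = uxx x y *\<^sub>R K12 + (- 2 * \<sigma> * sinh (u x y) * ux x y) *\<^sub>R K13
   + (2 * \<kappa> * cosh (u x y) * ux x y) *\<^sub>R K23"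

lemmas [derivative_intros] = du_x du_y dux_x dux_y duy_x duy_y

lemma cont_case: "continuous_on UNIV (\<lambda>p. f (fst p) (snd p)) \<Longrightarrow> continuous_on UNIV (\<lambda>(x, y). f x y)"
  by (simp add: case_prod_unfold)

sublocale fr: frob AA BB AAy BBx
proof unfold_locales
  show "continuous_on UNIV (\<lambda>(x, y). AA x y)"
    by (rule cont_case) (unfold AA_def p1_def p2_def, intro continuous_intros cu cux cuy)
  show "continuous_on UNIV (\<lambda>(x, y). BB x y)"
    by (rule cont_case) (unfold BB_def q1_def q2_def, intro continuous_intros cu cux cuy)
  show "continuous_on UNIV (\<lambda>(x, y). AAy x y)"
    by (rule cont_case) (unfold AAy_def, intro continuous_intros cu cux cuy cuyy)
  show "continuous_on UNIV (\<lambda>(x, y). BBx x y)"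
    by (rule cont_case) (unfold BBx_def, intro continuous_intros cu cux cuy cuxx)
  show "((\<lambda>y. AA x y) has_vector_derivative AAy x y) (at y)" for x y
    unfolding AA_def AAy_def p1_def p2_def
    by (auto intro!: derivative_eq_intros simp: algebra_simps)
  show "((\<lambda>x. BB x y) has_vector_derivative BBx x y) (at x)" for x y
    unfolding BB_def BBx_def q1_def q2_def
    by (auto intro!: derivative_eq_intros simp: algebra_simps)
  show "transpose (AA x y) = - AA x y" for x y unfolding AA_def by (rule Kskew)
  show "transpose (BB x y) = - BB x y" for x y unfolding BB_def by (rule Kskew)
  show "AAy x y - BBx x y = AA x y ** BB x y - BB x y ** AA x y" for x y
  proof -
    have k: "\<kappa>\<^sup>2 = 1 - \<sigma>\<^sup>2" using ks by simp
    have "AAy x y - BBx x y = (p1 x y * q2 x y - p2 x y * q1 x y) *\<^sub>R K12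
        + (p2 x y * ux x y - (- uy x y) * q2 x y) *\<^sub>R K13 + ((- uy x y) * q1 x y - p1 x y * ux x y) *\<^sub>R K23"
    proof -
      have kk: "\<kappa> * \<kappa> + \<sigma> * \<sigma> = 1" using ks by (simp add: power2_eq_square)
      have "p1 x y * q2 x y - p2 x y * q1 x y = 4 * cosh (u x y) * sinh (u x y) * (\<kappa> * \<kappa> + \<sigma> * \<sigma>)"
        unfolding p1_def p2_def q1_def q2_def by (simp add: algebra_simps)
      also have "\<dots> = - uyy x y - uxx x y" using sg[of x y] unfolding kk sinh_double by (simp add: algebra_simps)
      finally have "- uyy x y - uxx x y = p1 x y * q2 x y - p2 x y * q1 x y" by simp
      then show ?thesis unfolding AAy_def BBx_def p1_def p2_def q1_def q2_def
        unfolding mat_entries_eq forall_3 by (simp add: Kdefs algebra_simps)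
    qed
    also have "\<dots> = AA x y ** BB x y - BB x y ** AA x y"
      unfolding AA_def BB_def by (rule test_compat[symmetric])
    finally show ?thesis .
  qed
qed

end

lemma rot_orth: assumes "(F::mat3) ** transpose F = mat 1" shows "orthogonal_matrix F"
  using assms matrix_left_right_inverse[of F "transpose F"] by (simp add: orthogonal_matrix_def)

lemma rot_inner: assumes "(F::mat3) ** transpose F = mat 1" shows "(F *v a) \<bullet> (F *v b) = a \<bullet> b"
proof -
  have "orthogonal_transformation (\<lambda>x. F *v x)"
    using rot_orth[OF assms] by (simp add: orthogonal_transformation_matrix)
  then show ?thesis by (simp add: orthogonal_transformation_def)
qed

lemma rot_cross: assumes "(F::mat3) ** transpose F = mat 1" "det F = 1"
  shows "cross3 (F *v a) (F *v b) = F *v (cross3 a b)"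
  using assms rot_orth by (simp add: cross_rotation_matrix rotation_matrix_def)

context sgframe
begin

definition "pv x y = p1 x y *\<^sub>R e1 + p2 x y *\<^sub>R e2"
definition "qv x y = q1 x y *\<^sub>R e1 + q2 x y *\<^sub>R e2"
definition "pvx x y = (2 * \<kappa> * sinh (u x y) * ux x y) *\<^sub>R e1 + (2 * \<sigma> * cosh (u x y) * ux x y) *\<^sub>R e2"
definition "pvy x y = (2 * \<kappa> * sinh (u x y) * uy x y) *\<^sub>R e1 + (2 * \<sigma> * cosh (u x y) * uy x y) *\<^sub>R e2"
definition "qvx x y = (- 2 * \<sigma> * sinh (u x y) * ux x y) *\<^sub>R e1 + (2 * \<kappa> * cosh (u x y) * ux x y) *\<^sub>R e2"
definition "qvy x y = (- 2 * \<sigma> * sinh (u x y) * uy x y) *\<^sub>R e1 + (2 * \<kappa> * cosh (u x y) * uy x y) *\<^sub>R e2"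

definition "phi x y = fr.F x y *v e3"
definition "phix x y = fr.F x y *v pv x y"
definition "phiy x y = fr.F x y *v qv x y"
definition "phixx x y = fr.F x y *v (AA x y *v pv x y + pvx x y)"
definition "phixy x y = fr.F x y *v (BB x y *v pv x y + pvy x y)"
definition "phiyx x y = fr.F x y *v (AA x y *v qv x y + qvx x y)"
definition "phiyy x y = fr.F x y *v (BB x y *v qv x y + qvy x y)"

lemma AA_e3: "AA x y *v e3 = pv x y" unfolding AA_def pv_def by (rule Kmv)
lemma BB_e3: "BB x y *v e3 = qv x y" unfolding BB_def qv_def by (rule Kmv)

lemma d_phi_x: "((\<lambda>x. phi x y) has_vector_derivative phix x y) (at x)"
proof -
  have "((\<lambda>x. fr.F x y *v e3) has_vector_derivative fr.F x y *v 0 + (fr.F x y ** AA x y) *v e3) (at x)"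
    by (rule mv_deriv[OF fr.F_dx has_vector_derivative_const])
  then show ?thesis by (simp add: phi_def phix_def matrix_vector_mul_assoc[symmetric] AA_e3)
qed

lemma d_phi_y: "((\<lambda>y. phi x y) has_vector_derivative phiy x y) (at y)"
proof -
  have "((\<lambda>y. fr.F x y *v e3) has_vector_derivative fr.F x y *v 0 + (fr.F x y ** BB x y) *v e3) (at y)"
    by (rule mv_deriv[OF fr.F_dy has_vector_derivative_const])
  then show ?thesis by (simp add: phi_def phiy_def matrix_vector_mul_assoc[symmetric] BB_e3)
qed

lemma d_pv_x: "((\<lambda>x. pv x y) has_vector_derivative pvx x y) (at x)"
  unfolding pv_def pvx_def p1_def p2_def by (auto intro!: derivative_eq_intros simp: algebra_simps)
lemma d_pv_y: "((\<lambda>y. pv x y) has_vector_derivative pvy x y) (at y)"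
  unfolding pv_def pvy_def p1_def p2_def by (auto intro!: derivative_eq_intros simp: algebra_simps)
lemma d_qv_x: "((\<lambda>x. qv x y) has_vector_derivative qvx x y) (at x)"
  unfolding qv_def qvx_def q1_def q2_def by (auto intro!: derivative_eq_intros simp: algebra_simps)
lemma d_qv_y: "((\<lambda>y. qv x y) has_vector_derivative qvy x y) (at y)"
  unfolding qv_def qvy_def q1_def q2_def by (auto intro!: derivative_eq_intros simp: algebra_simps)

lemma d_phix_x: "((\<lambda>x. phix x y) has_vector_derivative phixx x y) (at x)"
proof -
  have "((\<lambda>x. fr.F x y *v pv x y) has_vector_derivative fr.F x y *v pvx x y + (fr.F x y ** AA x y) *v pv x y) (at x)"
    by (rule mv_deriv[OF fr.F_dx d_pv_x])
  then show ?thesis by (simp add: phix_def phixx_def matrix_vector_mul_assoc[symmetric] matrix_vector_right_distrib add.commute)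
qed
lemma d_phix_y: "((\<lambda>y. phix x y) has_vector_derivative phixy x y) (at y)"
proof -
  have "((\<lambda>y. fr.F x y *v pv x y) has_vector_derivative fr.F x y *v pvy x y + (fr.F x y ** BB x y) *v pv x y) (at y)"
    by (rule mv_deriv[OF fr.F_dy d_pv_y])
  then show ?thesis by (simp add: phix_def phixy_def matrix_vector_mul_assoc[symmetric] matrix_vector_right_distrib add.commute)
qed
lemma d_phiy_x: "((\<lambda>x. phiy x y) has_vector_derivative phiyx x y) (at x)"
proof -
  have "((\<lambda>x. fr.F x y *v qv x y) has_vector_derivative fr.F x y *v qvx x y + (fr.F x y ** AA x y) *v qv x y) (at x)"
    by (rule mv_deriv[OF fr.F_dx d_qv_x])
  then show ?thesis by (simp add: phiy_def phiyx_def matrix_vector_mul_assoc[symmetric] matrix_vector_right_distrib add.commute)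
qed
lemma d_phiy_y: "((\<lambda>y. phiy x y) has_vector_derivative phiyy x y) (at y)"
proof -
  have "((\<lambda>y. fr.F x y *v qv x y) has_vector_derivative fr.F x y *v qvy x y + (fr.F x y ** BB x y) *v qv x y) (at y)"
    by (rule mv_deriv[OF fr.F_dy d_qv_y])
  then show ?thesis by (simp add: phiy_def phiyy_def matrix_vector_mul_assoc[symmetric] matrix_vector_right_distrib add.commute)
qed

lemma contF': "continuous_on UNIV (\<lambda>p. fr.F (fst p) (snd p))"
  using fr.contF by (simp add: case_prod_unfold)

lemma cont_vec: "continuous_on UNIV (\<lambda>p. v (fst p) (snd p)) \<Longrightarrow> continuous_on UNIV (\<lambda>(x, y). fr.F x y *v v x y)"
  using mv_cont[OF contF'] by (simp add: case_prod_unfold)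

lemma cont_mat: "continuous_on UNIV (\<lambda>p. (M (fst p) (snd p) :: mat3)) \<Longrightarrow> continuous_on UNIV (\<lambda>p. v (fst p) (snd p))
  \<Longrightarrow> continuous_on UNIV (\<lambda>p. M (fst p) (snd p) *v v (fst p) (snd p))"
  by (rule mv_cont)

lemma cAA: "continuous_on UNIV (\<lambda>p. AA (fst p) (snd p))"
  using fr.contA by (simp add: case_prod_unfold)
lemma cBB: "continuous_on UNIV (\<lambda>p. BB (fst p) (snd p))"
  using fr.contB by (simp add: case_prod_unfold)

lemma cont_phis:
  "continuous_on UNIV (\<lambda>(x, y). phi x y)" "continuous_on UNIV (\<lambda>(x, y). phix x y)"
  "continuous_on UNIV (\<lambda>(x, y). phiy x y)" "continuous_on UNIV (\<lambda>(x, y). phixx x y)"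
  "continuous_on UNIV (\<lambda>(x, y). phixy x y)" "continuous_on UNIV (\<lambda>(x, y). phiyx x y)"
  "continuous_on UNIV (\<lambda>(x, y). phiyy x y)"
  unfolding phi_def phix_def phiy_def phixx_def phixy_def phiyx_def phiyy_def
  by (intro cont_vec continuous_intros cont_mat cAA cBB;
      unfold pv_def qv_def pvx_def pvy_def qvx_def qvy_def p1_def p2_def q1_def q2_def;
      intro continuous_intros cu cux cuy)+

end

context sgframe
begin

lemma inner_rot: "(fr.F x y *v a) \<bullet> (fr.F x y *v b) = a \<bullet> b"
  by (rule rot_inner[OF fr.F_orth])

lemma geo_inner:
  "phi x y \<bullet> phi x y = 1"
  "phix x y \<bullet> phix x y = (p1 x y)\<^sup>2 + (p2 x y)\<^sup>2"
  "phiy x y \<bullet> phiy x y = (q1 x y)\<^sup>2 + (q2 x y)\<^sup>2"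
  "phix x y \<bullet> phiy x y = p1 x y * q1 x y + p2 x y * q2 x y"
  "phi x y \<bullet> phix x y = 0"
  "phi x y \<bullet> phiy x y = 0"
  unfolding phi_def phix_def phiy_def inner_rot pv_def qv_def
  by (simp_all add: Kdefs inner_vec_def sum_3 power2_eq_square algebra_simps)

lemma geo_norm: "norm (phi x y) = 1"
  using geo_inner(1)[of x y] by (simp add: norm_eq_sqrt_inner)

lemma geo_cross: "cross3 (phi x y) (phix x y) \<bullet> phiy x y = p1 x y * q2 x y - p2 x y * q1 x y"
  unfolding phi_def phix_def phiy_def rot_cross[OF fr.F_orth fr.F_det] inner_rot pv_def qv_def
  by (simp add: Kdefs inner_vec_def sum_3 cross3_def algebra_simps)

lemma geo_crosscross:
  "cross3 (phi x y) (phix x y) \<bullet> cross3 (phi x y) (phix x y) = phix x y \<bullet> phix x y"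
  "cross3 (phi x y) (phiy x y) \<bullet> cross3 (phi x y) (phiy x y) = phiy x y \<bullet> phiy x y"
  "cross3 (phi x y) (phix x y) \<bullet> cross3 (phi x y) (phiy x y) = phix x y \<bullet> phiy x y"
  by (simp_all add: dot_cross geo_inner(1,5,6) inner_commute)

lemma geo_lap: "phixx x y + phiyy x y = (- ((p1 x y)\<^sup>2 + (p2 x y)\<^sup>2 + (q1 x y)\<^sup>2 + (q2 x y)\<^sup>2)) *\<^sub>R phi x y"
proof -
  have v: "AA x y *v pv x y + pvx x y + (BB x y *v qv x y + qvy x y)
     = (- ((p1 x y)\<^sup>2 + (p2 x y)\<^sup>2 + (q1 x y)\<^sup>2 + (q2 x y)\<^sup>2)) *\<^sub>R e3"
    unfolding AA_def BB_def pv_def qv_def Kmv2 pvx_def qvy_def p1_def p2_def q1_def q2_def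
    by (simp add: vec_eq_iff forall_3 Kdefs power2_eq_square algebra_simps)
  have "phixx x y + phiyy x y = fr.F x y *v (AA x y *v pv x y + pvx x y + (BB x y *v qv x y + qvy x y))"
    by (simp add: phixx_def phiyy_def matrix_vector_right_distrib)
  also have "\<dots> = (- ((p1 x y)\<^sup>2 + (p2 x y)\<^sup>2 + (q1 x y)\<^sup>2 + (q2 x y)\<^sup>2)) *\<^sub>R phi x y"
    unfolding v phi_def by (simp add: matrix_vector_mult_scaleR)
  finally show ?thesis .
qed

end

lemma C2_from:
  fixes g gx gy gxx gxy gyx gyy :: "real \<Rightarrow> real \<Rightarrow> 'a::real_normed_vector"
  assumes d1: "\<And>x y. ((\<lambda>x. g x y) has_vector_derivative gx x y) (at x)"
    and d2: "\<And>x y. ((\<lambda>y. g x y) has_vector_derivative gy x y) (at y)"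
    and d3: "\<And>x y. ((\<lambda>x. gx x y) has_vector_derivative gxx x y) (at x)"
    and d4: "\<And>x y. ((\<lambda>y. gx x y) has_vector_derivative gxy x y) (at y)"
    and d5: "\<And>x y. ((\<lambda>x. gy x y) has_vector_derivative gyx x y) (at x)"
    and d6: "\<And>x y. ((\<lambda>y. gy x y) has_vector_derivative gyy x y) (at y)"
    and c1: "continuous_on UNIV (\<lambda>(x, y). gx x y)"
    and c2: "continuous_on UNIV (\<lambda>(x, y). gy x y)"
    and c3: "continuous_on UNIV (\<lambda>(x, y). gxx x y)"
    and c4: "continuous_on UNIV (\<lambda>(x, y). gxy x y)"
    and c5: "continuous_on UNIV (\<lambda>(x, y). gyx x y)"
    and c6: "continuous_on UNIV (\<lambda>(x, y). gyy x y)"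
  shows "C2 (\<lambda>z. g (Re z) (Im z))"
    "dx (\<lambda>z. g (Re z) (Im z)) = (\<lambda>z. gx (Re z) (Im z))"
    "dy (\<lambda>z. g (Re z) (Im z)) = (\<lambda>z. gy (Re z) (Im z))"
    "dx (dx (\<lambda>z. g (Re z) (Im z))) = (\<lambda>z. gxx (Re z) (Im z))"
    "dy (dy (\<lambda>z. g (Re z) (Im z))) = (\<lambda>z. gyy (Re z) (Im z))"
    "frechet_derivative (\<lambda>z. g (Re z) (Im z)) (at z) = (\<lambda>h. Re h *\<^sub>R gx (Re z) (Im z) + Im h *\<^sub>R gy (Re z) (Im z))"
proof -
  note b0 = bridge_dx[OF d1 d2 c2]
  note bx = bridge_dx[OF d3 d4 c4]
  note by' = bridge_dx[OF d5 d6 c6]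
  show "dx (\<lambda>z. g (Re z) (Im z)) = (\<lambda>z. gx (Re z) (Im z))" by (rule b0(2))
  show "dy (\<lambda>z. g (Re z) (Im z)) = (\<lambda>z. gy (Re z) (Im z))" by (rule b0(3))
  show "dx (dx (\<lambda>z. g (Re z) (Im z))) = (\<lambda>z. gxx (Re z) (Im z))" unfolding b0(2) by (rule bx(2))
  show "dy (dy (\<lambda>z. g (Re z) (Im z))) = (\<lambda>z. gyy (Re z) (Im z))" unfolding b0(3) by (rule by'(3))
  show "frechet_derivative (\<lambda>z. g (Re z) (Im z)) (at z) = (\<lambda>h. Re h *\<^sub>R gx (Re z) (Im z) + Im h *\<^sub>R gy (Re z) (Im z))"
    by (rule b0(4))
  show "C2 (\<lambda>z. g (Re z) (Im z))"
    unfolding C2_def b0(2) b0(3) bx(2) bx(3) by'(2) by'(3)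
    using b0(1) bx(1) by'(1) cont_to_complex[OF c1] cont_to_complex[OF c2] cont_to_complex[OF c3]
      cont_to_complex[OF c4] cont_to_complex[OF c5] cont_to_complex[OF c6]
    by blast
qed

lemma sg_inst:
  fixes f :: "complex \<Rightarrow> real"
  assumes sgf: "sinh_gordon f" and e: "\<epsilon> = 1 \<or> \<epsilon> = -1" and ks: "\<kappa>\<^sup>2 + \<sigma>\<^sup>2 = 1"
  shows "sgframe (\<lambda>x y. \<epsilon> * f (Complex x y)) (\<lambda>x y. \<epsilon> * dx f (Complex x y)) (\<lambda>x y. \<epsilon> * dy f (Complex x y))
     (\<lambda>x y. \<epsilon> * dx (dx f) (Complex x y)) (\<lambda>x y. \<epsilon> * dy (dx f) (Complex x y))
     (\<lambda>x y. \<epsilon> * dx (dy f) (Complex x y)) (\<lambda>x y. \<epsilon> * dy (dy f) (Complex x y)) \<kappa> \<sigma>"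
proof -
  from sgf have C: "C2 f" and eq: "\<And>z. (dx (dx f) z + dy (dy f) z) / 4 + sinh (2 * f z) / 2 = 0"
    unfolding sinh_gordon_def by auto
  from C have df: "\<And>z. f differentiable at z" and ddx: "\<And>z. dx f differentiable at z"
    and ddy: "\<And>z. dy f differentiable at z"
    and cs: "continuous_on UNIV (dx f)" "continuous_on UNIV (dy f)" "continuous_on UNIV (dx (dx f))"
       "continuous_on UNIV (dy (dx f))" "continuous_on UNIV (dx (dy f))" "continuous_on UNIV (dy (dy f))"
    unfolding C2_def by auto
  have cf: "continuous_on UNIV f"
    using df by (intro continuous_at_imp_continuous_on ballI differentiable_imp_continuous_within) auto
  have cc: "continuous_on UNIV (\<lambda>p. \<epsilon> * h (Complex (fst p) (snd p)))" if "continuous_on UNIV h" for h :: "complex \<Rightarrow> real"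
    using cont_from_complex[OF that] by (auto simp: case_prod_unfold intro!: continuous_intros)
  have rx: "((\<lambda>x. \<epsilon> * h (Complex x y)) has_real_derivative \<epsilon> * dx h (Complex x y)) (at x)"
    if "\<And>z. h differentiable at z" for h :: "complex \<Rightarrow> real" and x y
    using partial_x[OF that] by (auto intro!: derivative_eq_intros simp: has_real_derivative_iff_has_vector_derivative[symmetric])
  have ry: "((\<lambda>y. \<epsilon> * h (Complex x y)) has_real_derivative \<epsilon> * dy h (Complex x y)) (at y)"
    if "\<And>z. h differentiable at z" for h :: "complex \<Rightarrow> real" and x y
    using partial_y[OF that] by (auto intro!: derivative_eq_intros simp: has_real_derivative_iff_has_vector_derivative[symmetric])
  have sgx: "\<epsilon> * dx (dx f) (Complex x y) + \<epsilon> * dy (dy f) (Complex x y) = - (2 * sinh (2 * (\<epsilon> * f (Complex x y))))" for x y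
  proof -
    have "dx (dx f) (Complex x y) + dy (dy f) (Complex x y) = - 2 * sinh (2 * f (Complex x y))"
      using eq[of "Complex x y"] by (simp add: field_simps)
    then show ?thesis using e by (auto simp: algebra_simps)
  qed
  show ?thesis
  proof (unfold_locales)
    show "continuous_on UNIV (\<lambda>p. \<epsilon> * f (Complex (fst p) (snd p)))" by (rule cc[OF cf])
  qed (use cc[OF cs(1)] cc[OF cs(2)] cc[OF cs(3)] cc[OF cs(4)] cc[OF cs(5)] cc[OF cs(6)]
         rx[OF df] ry[OF df] rx[OF ddx] ry[OF ddx] rx[OF ddy] ry[OF ddy] ks sgx in auto)
qed


lemma arith_core:
  fixes c s cv sv cw sw :: real
  assumes h1: "c\<^sup>2 + s\<^sup>2 = 1" and h2: "cv\<^sup>2 = sv\<^sup>2 + 1" and h3: "cw\<^sup>2 = sw\<^sup>2 + 1"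
  shows "(2*c*cv)\<^sup>2 + (2* s* sv)\<^sup>2 + (2* s*cw)\<^sup>2 + (2*c* sw)\<^sup>2 = 4 * ((cv*cw + sv* sw) * (cv*cw - sv* sw))"
    "(2* s*cv)\<^sup>2 + (2*c* sv)\<^sup>2 + (2*c*cw)\<^sup>2 + (2* s* sw)\<^sup>2 = 4 * ((cv*cw + sv* sw) * (cv*cw - sv* sw))"
    "(cv* sv - cw* sw) = (cv*cw + sv* sw) * (sv*cw - cv* sw)"
    "(cv* sv + cw* sw) = (cv*cw - sv* sw) * (sv*cw + cv* sw)"
    "((2*c*cv)\<^sup>2 + (2* s* sv)\<^sup>2 - (2* s*cv)\<^sup>2 - (2*c* sv)\<^sup>2) - ((2* s*cw)\<^sup>2 + (2*c* sw)\<^sup>2 - (2*c*cw)\<^sup>2 - (2* s* sw)\<^sup>2) = 8 * (c\<^sup>2 - s\<^sup>2)"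
  using assms by algebra+

theorem theorem4p4:
  fixes v w :: "complex \<Rightarrow> real"
  assumes "sinh_gordon v" and "sinh_gordon w"
  shows "\<exists>\<Phi> :: real \<Rightarrow> complex \<Rightarrow> pt. \<forall>t::real.
     (let lam = (\<lambda>z. 4 * cosh (v z + w z) * cosh (v z - w z)) in
       minimal_conformal_immersion (\<Phi> t) lam \<and>
       (\<forall>z. kaehler1 (\<Phi> t) lam z = tanh (v z - w z) \<and>
            kaehler2 (\<Phi> t) lam z = tanh (v z + w z)) \<and>
       (\<forall>z. (kaehler1 (\<Phi> t) lam z)\<^sup>2 \<noteq> 1 \<and> (kaehler2 (\<Phi> t) lam z)\<^sup>2 \<noteq> 1) \<and>
       (\<forall>z. hopf (\<Phi> t) z = cis t))"
proof -
  define \<Phi> where "\<Phi> t z =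
    (sgframe.phi (\<lambda>x y. v (Complex x y)) (\<lambda>x y. dx v (Complex x y)) (\<lambda>x y. dy v (Complex x y))
       (cos (t/2)) (sin (t/2)) (Re z) (Im z),
     sgframe.phi (\<lambda>x y. - w (Complex x y)) (\<lambda>x y. - dx w (Complex x y)) (\<lambda>x y. - dy w (Complex x y))
       (- sin (t/2)) (cos (t/2)) (Re z) (Im z))"
    for t z
  show ?thesis
  proof (intro exI[of _ \<Phi>] allI)
    fix t :: real
    define c where "c = cos (t/2)"
    define s where "s = sin (t/2)"
    have cs: "c\<^sup>2 + s\<^sup>2 = 1" by (simp add: c_def s_def add.commute)
    interpret a: sgframe "\<lambda>x y. v (Complex x y)" "\<lambda>x y. dx v (Complex x y)" "\<lambda>x y. dy v (Complex x y)"
       "\<lambda>x y. dx (dx v) (Complex x y)" "\<lambda>x y. dy (dx v) (Complex x y)"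
       "\<lambda>x y. dx (dy v) (Complex x y)" "\<lambda>x y. dy (dy v) (Complex x y)" "cos (t/2)" "sin (t/2)"
      using sg_inst[OF assms(1), of 1 "cos (t/2)" "sin (t/2)"] by (simp add: add.commute)
    interpret b: sgframe "\<lambda>x y. - w (Complex x y)" "\<lambda>x y. - dx w (Complex x y)" "\<lambda>x y. - dy w (Complex x y)"
       "\<lambda>x y. - dx (dx w) (Complex x y)" "\<lambda>x y. - dy (dx w) (Complex x y)"
       "\<lambda>x y. - dx (dy w) (Complex x y)" "\<lambda>x y. - dy (dy w) (Complex x y)" "- sin (t/2)" "cos (t/2)"
      using sg_inst[OF assms(2), of "-1" "- sin (t/2)" "cos (t/2)"] by simp
    define g where "g x y = (a.phi x y, b.phi x y)" for x y
    have \<Phi>g: "\<Phi> t = (\<lambda>z. g (Re z) (Im z))" by (simp add: fun_eq_iff \<Phi>_def g_def)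
    have pc: "continuous_on UNIV (\<lambda>(x, y). (f1 x y, f2 x y))"
      if "continuous_on UNIV (\<lambda>(x, y). f1 x y)" "continuous_on UNIV (\<lambda>(x, y). f2 x y)"
      for f1 f2 :: "real \<Rightarrow> real \<Rightarrow> real^3"
      using continuous_on_Pair[OF that] by (simp add: case_prod_unfold)
    note C = C2_from[where g=g and gx="\<lambda>x y. (a.phix x y, b.phix x y)" and gy="\<lambda>x y. (a.phiy x y, b.phiy x y)"
        and gxx="\<lambda>x y. (a.phixx x y, b.phixx x y)" and gxy="\<lambda>x y. (a.phixy x y, b.phixy x y)"
        and gyx="\<lambda>x y. (a.phiyx x y, b.phiyx x y)" and gyy="\<lambda>x y. (a.phiyy x y, b.phiyy x y)",
        OF _ _ _ _ _ _ pc pc pc pc pc pc, unfolded \<Phi>g[symmetric]]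
    have C2: "C2 (\<Phi> t)" and dxP: "dx (\<Phi> t) = (\<lambda>z. (a.phix (Re z) (Im z), b.phix (Re z) (Im z)))"
      and dyP: "dy (\<Phi> t) = (\<lambda>z. (a.phiy (Re z) (Im z), b.phiy (Re z) (Im z)))"
      and dxxP: "dx (dx (\<Phi> t)) = (\<lambda>z. (a.phixx (Re z) (Im z), b.phixx (Re z) (Im z)))"
      and dyyP: "dy (dy (\<Phi> t)) = (\<lambda>z. (a.phiyy (Re z) (Im z), b.phiyy (Re z) (Im z)))"
      and frP: "\<And>z. frechet_derivative (\<Phi> t) (at z) = (\<lambda>h. Re h *\<^sub>R (a.phix (Re z) (Im z), b.phix (Re z) (Im z)) + Im h *\<^sub>R (a.phiy (Re z) (Im z), b.phiy (Re z) (Im z)))"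
      by (rule C; auto simp: g_def intro!: derivative_eq_intros a.d_phi_x a.d_phi_y b.d_phi_x b.d_phi_y
          a.d_phix_x a.d_phix_y a.d_phiy_x a.d_phiy_y b.d_phix_x b.d_phix_y b.d_phiy_x b.d_phiy_y a.cont_phis b.cont_phis)+
    have Cz: "\<And>z. Complex (Re z) (Im z) = z" by (rule complex_surj)
    have PhiZ: "\<Phi> t z = (a.phi (Re z) (Im z), b.phi (Re z) (Im z))" for z by (simp add: \<Phi>g g_def)
    define lam where "lam = (\<lambda>z. 4 * cosh (v z + w z) * cosh (v z - w z))"
    have lampos: "lam z > 0" for z unfolding lam_def by simp
    have cs2: "c\<^sup>2 + s\<^sup>2 = 1" by (rule cs)
    have hv: "(cosh (v z))\<^sup>2 = (sinh (v z))\<^sup>2 + 1" for z by (rule cosh_square_eq)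
    have hw: "(cosh (w z))\<^sup>2 = (sinh (w z))\<^sup>2 + 1" for z by (rule cosh_square_eq)
    have lamE: "lam z = 4 * ((cosh (v z) * cosh (w z) + sinh (v z) * sinh (w z)) * (cosh (v z) * cosh (w z) - sinh (v z) * sinh (w z)))" for z
      unfolding lam_def cosh_add cosh_diff by simp
    note core = arith_core[OF cs2 hv hw]
    have ap: "a.p1 (Re z) (Im z) = 2 * c * cosh (v z)" "a.p2 (Re z) (Im z) = 2 * s * sinh (v z)"
      "a.q1 (Re z) (Im z) = - 2 * s * cosh (v z)" "a.q2 (Re z) (Im z) = 2 * c * sinh (v z)" for z
      by (simp_all add: a.p1_def a.p2_def a.q1_def a.q2_def c_def s_def)
    have bp: "b.p1 (Re z) (Im z) = - 2 * s * cosh (w z)" "b.p2 (Re z) (Im z) = - 2 * c * sinh (w z)"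
      "b.q1 (Re z) (Im z) = - 2 * c * cosh (w z)" "b.q2 (Re z) (Im z) = 2 * s * sinh (w z)" for z
      by (simp_all add: b.p1_def b.p2_def b.q1_def b.q2_def c_def s_def)
    have dxdx: "dx (\<Phi> t) z \<bullet> dx (\<Phi> t) z = lam z" for z
    proof -
      have "dx (\<Phi> t) z \<bullet> dx (\<Phi> t) z = (2*c*cosh (v z))\<^sup>2 + (2* s* sinh (v z))\<^sup>2 + (2* s*cosh (w z))\<^sup>2 + (2*c* sinh (w z))\<^sup>2"
        by (simp add: dxP a.geo_inner b.geo_inner ap bp power_mult_distrib)
      also have "\<dots> = lam z" using core(1) lamE by simp
      finally show ?thesis .
    qed
    have dydy: "dy (\<Phi> t) z \<bullet> dy (\<Phi> t) z = lam z" for z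
    proof -
      have "dy (\<Phi> t) z \<bullet> dy (\<Phi> t) z = (2* s*cosh (v z))\<^sup>2 + (2*c* sinh (v z))\<^sup>2 + (2*c*cosh (w z))\<^sup>2 + (2* s* sinh (w z))\<^sup>2"
        by (simp add: dyP a.geo_inner b.geo_inner ap bp power_mult_distrib)
      also have "\<dots> = lam z" using core(2) lamE by simp
      finally show ?thesis .
    qed
    have dxdy: "dx (\<Phi> t) z \<bullet> dy (\<Phi> t) z = 0" for z
      using hv[of z] hw[of z] apply (simp add: dxP dyP a.geo_inner b.geo_inner ap bp algebra_simps)
      by algebra
    have inj: "inj (frechet_derivative (\<Phi> t) (at z))" for z
    proof (rule injI)
      fix h1 h2 assume h: "frechet_derivative (\<Phi> t) (at z) h1 = frechet_derivative (\<Phi> t) (at z) h2"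
      let ?X = "dx (\<Phi> t) z" and ?Y = "dy (\<Phi> t) z"
      have fr: "frechet_derivative (\<Phi> t) (at z) h = Re h *\<^sub>R ?X + Im h *\<^sub>R ?Y" for h
        by (simp add: frP dxP dyP)
      have e: "Re h1 *\<^sub>R ?X + Im h1 *\<^sub>R ?Y = Re h2 *\<^sub>R ?X + Im h2 *\<^sub>R ?Y" using h by (simp add: fr)
      have "(Re h1 *\<^sub>R ?X + Im h1 *\<^sub>R ?Y) \<bullet> ?X = (Re h2 *\<^sub>R ?X + Im h2 *\<^sub>R ?Y) \<bullet> ?X" using e by simp
      have yx: "?Y \<bullet> ?X = 0" using dxdy[of z] by (simp add: inner_commute)
      then have "Re h1 * lam z = Re h2 * lam z" using \<open>(Re h1 *\<^sub>R ?X + Im h1 *\<^sub>R ?Y) \<bullet> ?X = (Re h2 *\<^sub>R ?X + Im h2 *\<^sub>R ?Y) \<bullet> ?X\<close>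
        by (simp only: inner_add_left inner_scaleR_left dxdx yx)
      then have r: "Re h1 = Re h2" using lampos[of z] by simp
      have "(Re h1 *\<^sub>R ?X + Im h1 *\<^sub>R ?Y) \<bullet> ?Y = (Re h2 *\<^sub>R ?X + Im h2 *\<^sub>R ?Y) \<bullet> ?Y" using e by simp
      then have "Im h1 * lam z = Im h2 * lam z" by (simp only: inner_add_left inner_scaleR_left dydy dxdy)
      then have "Im h1 = Im h2" using lampos[of z] by simp
      with r show "h1 = h2" by (simp add: complex_eq_iff)
    qed
    have S2: "in_S2xS2 (\<Phi> t z)" for z by (simp add: in_S2xS2_def PhiZ a.geo_norm b.geo_norm)
    have mc: "mean_curvature (\<Phi> t) lam z = 0" for z
    proof -
      have "dx (dx (\<Phi> t)) z + dy (dy (\<Phi> t)) z = (a.phixx (Re z) (Im z) + a.phiyy (Re z) (Im z), b.phixx (Re z) (Im z) + b.phiyy (Re z) (Im z))"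
        by (simp add: dxxP dyyP)
      then show ?thesis
        by (simp add: mean_curvature_def tang_proj_def PhiZ a.geo_lap b.geo_lap a.geo_inner(1) b.geo_inner(1) zero_prod_def)
    qed
    have k1: "kaehler1 (\<Phi> t) lam z = tanh (v z - w z)" for z
    proof -
      have "J1 (\<Phi> t z) (dx (\<Phi> t) z) \<bullet> dy (\<Phi> t) z = 4 * (cosh (v z) * sinh (v z) - cosh (w z) * sinh (w z))"
        using cs2 apply (simp add: J1_def PhiZ dxP dyP a.geo_cross b.geo_cross ap bp)
        by algebra
      then have "kaehler1 (\<Phi> t) lam z = (4 * (cosh (v z) * sinh (v z) - cosh (w z) * sinh (w z))) / lam z"
        by (simp add: kaehler1_def)
      also have "\<dots> = tanh (v z - w z)"
      proof -
        have e: "4 * (cosh (v z) * sinh (v z) - cosh (w z) * sinh (w z)) = 4 * cosh (v z + w z) * sinh (v z - w z)"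
          using core(3)[of z] by (simp add: cosh_add sinh_diff)
        show ?thesis unfolding e lam_def tanh_def by simp
      qed
      finally show ?thesis .
    qed
    have k2: "kaehler2 (\<Phi> t) lam z = tanh (v z + w z)" for z
    proof -
      have "J2 (\<Phi> t z) (dx (\<Phi> t) z) \<bullet> dy (\<Phi> t) z = 4 * (cosh (v z) * sinh (v z) + cosh (w z) * sinh (w z))"
        using cs2 apply (simp add: J2_def PhiZ dxP dyP a.geo_cross b.geo_cross ap bp)
        by algebra
      then have "kaehler2 (\<Phi> t) lam z = (4 * (cosh (v z) * sinh (v z) + cosh (w z) * sinh (w z))) / lam z"
        by (simp add: kaehler2_def)
      also have "\<dots> = tanh (v z + w z)"
      proof -
        have e: "4 * (cosh (v z) * sinh (v z) + cosh (w z) * sinh (w z)) = 4 * cosh (v z - w z) * sinh (v z + w z)"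
          using core(4)[of z] by (simp add: cosh_diff sinh_add)
        show ?thesis unfolding e lam_def tanh_def by simp
      qed
      finally show ?thesis .
    qed
    have tsq: "(tanh x)\<^sup>2 \<noteq> 1" for x :: real
      using tanh_real_lt_1[of x] tanh_real_gt_neg1[of x] by (auto simp: power2_eq_1_iff)
    have cosT: "cos t = c\<^sup>2 - s\<^sup>2" and sinT: "sin t = 2 * s * c"
      using cos_double[of "t/2"] sin_double[of "t/2"] by (simp_all add: c_def s_def)
    have ca: "cross3 (a.phi x y) (a.phiy x y) \<bullet> cross3 (a.phi x y) (a.phix x y) = a.phix x y \<bullet> a.phiy x y" for x y
      using a.geo_crosscross(3)[of x y] by (simp add: inner_commute)
    have cb: "cross3 (b.phi x y) (b.phiy x y) \<bullet> cross3 (b.phi x y) (b.phix x y) = b.phix x y \<bullet> b.phiy x y" for x y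
      using b.geo_crosscross(3)[of x y] by (simp add: inner_commute)
    have hp: "hopf (\<Phi> t) z = cis t" for z
    proof -
      have re: "Re (hopf (\<Phi> t) z) = cos t"
        using cs2 hv[of z] hw[of z]
        apply (simp add: hopf_def cinner_def dz_def J1_def J2_def PhiZ dxP dyP cross_mult_right cross_minus_right
          a.geo_crosscross b.geo_crosscross ca cb a.geo_inner b.geo_inner ap bp cosT)
        by algebra
      have im: "Im (hopf (\<Phi> t) z) = sin t"
        using cs2 hv[of z] hw[of z]
        apply (simp add: hopf_def cinner_def dz_def J1_def J2_def PhiZ dxP dyP cross_mult_right cross_minus_right
          a.geo_crosscross b.geo_crosscross ca cb a.geo_inner b.geo_inner ap bp sinT)
        by algebra
      show ?thesis by (simp add: complex_eq_iff re im)
    qed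
    show "let lam = (\<lambda>z. 4 * cosh (v z + w z) * cosh (v z - w z)) in
       minimal_conformal_immersion (\<Phi> t) lam \<and>
       (\<forall>z. kaehler1 (\<Phi> t) lam z = tanh (v z - w z) \<and>
            kaehler2 (\<Phi> t) lam z = tanh (v z + w z)) \<and>
       (\<forall>z. (kaehler1 (\<Phi> t) lam z)\<^sup>2 \<noteq> 1 \<and> (kaehler2 (\<Phi> t) lam z)\<^sup>2 \<noteq> 1) \<and>
       (\<forall>z. hopf (\<Phi> t) z = cis t)"
      unfolding lam_def[symmetric] Let_def minimal_conformal_immersion_def conformal_immersion_metric_def
      using C2 S2 inj lampos dxdx dydy dxdy mc k1 k2 tsq hp by auto
  qed
qed

end
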